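(* For each $L\in\mathbb{N}$ let $(\eta^L(t))_{t\in\mathbb{Z}_+}$ be the RBB process with $L$ bins, with random initial state $\eta^L(0)\in\mathbb{Z}_+^L$ whose law is finitely exchangeable (invariant under permutations of the $L$ coordinates). Assume there is a probability measure $\mu$ on $\mathbb{Z}_+$ such that for every $n\in\mathbb{N}$ and all $\xi_1,\dots,\xi_n\in\mathbb{Z}_+$, $$\lim_{L\to\infty}\mathbb{P}(\eta^L_1(0)=\xi_1,\dots,\eta^L_n(0)=\xi_n)=\prod_{k=1}^n\mu(\{\xi_k\}).$$ Then for every $L$ and $t$ the law of $\eta^L(t)$ is finitely exchangeable, and for every $T\in\mathbb{N}$, every $n\in\mathbb{N}$ and all bounded functions $\Phi_1,\dots,\Phi_n:\mathbb{Z}_+^{T+1}\to\mathbb{R}$, $$\lim_{L\to\infty}\mathbb{E}\Big[\prod_{k=1}^n\Phi_k(\eta^L_k(0),\eta^L_k(1),\dots,\eta^L_k(T))\Big]=\prod_{k=1}^n\mathbb{E}\big[\Phi_k(\eta(0),\eta(1),\dots,\eta(T))\big],$$ where $(\eta(t))_{t\in\mathbb{Z}_+}$ is the nonlinear process with initial law $\eta(0)\sim\mu$.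
   Context: Repeated Balls-into-Bins (RBB) process with $L$ bins: a Markov chain $(\eta^L(t))_{t\in\mathbb{Z}_+}$ on $\mathbb{Z}_+^L$. For $\eta\in\mathbb{Z}_+^L$ let $w(\eta):=(\mathbf{1}(\eta_1>0),\dots,\mathbf{1}(\eta_L>0))$ and $K(\eta):=\sum_{j=1}^L\mathbf{1}(\eta_j>0)$. If $\eta^L(t)=\eta$, then $\eta^L(t+1)=\eta-w(\eta)+B(\eta)$, where, conditionally on the past, $B(\eta)$ is multinomial with $K(\eta)$ trials and cell probabilities $(1/L,\dots,1/L)$; i.e. one ball is removed from every nonempty bin and each removed ball is placed independently in a uniformly chosen bin. The nonlinear process $(\eta(t))_{t\in\mathbb{Z}_+}$ takes values in $\mathbb{Z}_+$: $\eta(0)$ has a given distribution; given $\eta(t)$, set $\rho(t):=\mathbb{P}(\eta(t)>0)$, let $N_{t+1}$ be Poisson with mean $\rho(t)$ (mean $0$ meaning identically $0$), independent of everything before, and set $\eta(t+1):=\eta(t)-\mathbf{1}(\eta(t)>0)+N_{t+1}$. *)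

theory Defs
  imports "HOL-Probability.Probability" "HOL-Combinatorics.Permutations"
begin

type_synonym config = "nat \<Rightarrow> nat"   (* bins indexed 0..L-1; value 0 outside *)

definition poi :: "real \<Rightarrow> nat pmf" where
  "poi r = (if 0 < r then poisson_pmf r else return_pmf 0)"

(* throw k balls independently and uniformly into bins 0..L-1 (multinomial increment) *)
fun add_balls :: "nat \<Rightarrow> nat \<Rightarrow> config \<Rightarrow> config pmf" where
  "add_balls L 0 \<eta> = return_pmf \<eta>"
| "add_balls L (Suc k) \<eta> =
     bind_pmf (add_balls L k \<eta>) (\<lambda>\<eta>'. map_pmf (\<lambda>j. \<eta>'(j := \<eta>' j + 1)) (pmf_of_set {..<L}))"

definition occ :: "nat \<Rightarrow> config \<Rightarrow> nat" where
  "occ L \<eta> = card {j. j < L \<and> 0 < \<eta> j}"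

definition rbb_step :: "nat \<Rightarrow> config \<Rightarrow> config pmf" where
  "rbb_step L \<eta> = add_balls L (occ L \<eta>)
      (\<lambda>j. if j < L then \<eta> j - (if 0 < \<eta> j then 1 else 0) else 0)"

fun rbb_law :: "nat \<Rightarrow> config pmf \<Rightarrow> nat \<Rightarrow> config pmf" where
  "rbb_law L init 0 = init"
| "rbb_law L init (Suc t) = bind_pmf (rbb_law L init t) (rbb_step L)"

fun rbb_path :: "nat \<Rightarrow> config pmf \<Rightarrow> nat \<Rightarrow> config list pmf" where
  "rbb_path L init 0 = map_pmf (\<lambda>\<eta>. [\<eta>]) init"
| "rbb_path L init (Suc T) =
     bind_pmf (rbb_path L init T) (\<lambda>xs. map_pmf (\<lambda>\<eta>'. xs @ [\<eta>']) (rbb_step L (last xs)))"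

(* joint law of the path [eta(0), ..., eta(T)] of the nonlinear process;
   rho(T) = P(eta(T) > 0) computed from the law of the last entry *)
fun nl_path :: "nat pmf \<Rightarrow> nat \<Rightarrow> nat list pmf" where
  "nl_path \<mu> 0 = map_pmf (\<lambda>x. [x]) \<mu>"
| "nl_path \<mu> (Suc T) =
     bind_pmf (nl_path \<mu> T) (\<lambda>xs.
       map_pmf (\<lambda>N. xs @ [last xs - (if 0 < last xs then 1 else 0) + N])
         (poi (measure_pmf.prob (nl_path \<mu> T) {ys. 0 < last ys})))"

end

theory Submission
  imports Defs "HOL-Real_Asymp.Real_Asymp"
begin


lemma integral_bind_pmf_bdd:
  fixes f :: "'b \<Rightarrow> real"
  assumes "\<And>y. \<bar>f y\<bar> \<le> B"
  shows "measure_pmf.expectation (bind_pmf M N) f = measure_pmf.expectation M (\<lambda>x. measure_pmf.expectation (N x) f)"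
  unfolding measure_pmf_bind
  apply (rule integral_bind[where K="count_space UNIV" and B=B and B'=1])
  using assms by (auto simp: measure_pmf.emeasure_space_1 intro: prob_space.finite_measure measure_pmf.prob_space_axioms
      measurable_pmf_measure1 measure_pmf_in_subprob_algebra)


lemma pmf_of_set_lessThan_perm:
  fixes L :: nat
  assumes "\<pi> permutes {..<L}" "0 < L"
  shows "map_pmf \<pi> (pmf_of_set {..<L}) = pmf_of_set {..<L}"
proof -
  have "inj_on \<pi> {..<L}" using assms(1) permutes_inj_on by blast
  moreover have "\<pi> ` {..<L} = {..<L}" using assms(1) permutes_image by blast
  moreover have "{..<L} \<noteq> {}" using assms(2) by auto
  ultimately have "map_pmf \<pi> (pmf_of_set {..<L}) = pmf_of_set (\<pi> ` {..<L})"
    by (intro map_pmf_of_set_inj) auto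
  then show ?thesis using \<open>\<pi> ` {..<L} = {..<L}\<close> by simp
qed

lemma add_balls_perm:
  assumes "\<pi> permutes {..<L}"
  shows "map_pmf (\<lambda>\<eta>. \<eta> \<circ> \<pi>) (add_balls L K \<zeta>) = add_balls L K (\<zeta> \<circ> \<pi>)"
proof (induction K)
  case 0
  then show ?case by simp
next
  case (Suc K)
  show ?case
  proof (cases "L = 0")
    case True
    then have "\<pi> = id" using assms by (auto simp: permutes_def fun_eq_iff)
    then show ?thesis by (simp add: o_def)
  next
    case False
    have ip: "inv \<pi> permutes {..<L}" using assms permutes_inv by blast
    have key: "map_pmf (\<lambda>j. \<eta>'(j := \<eta>' j + 1) \<circ> \<pi>) (pmf_of_set {..<L})
          = map_pmf (\<lambda>j. (\<eta>' \<circ> \<pi>)(j := (\<eta>' \<circ> \<pi>) j + 1)) (pmf_of_set {..<L})" for \<eta>' :: config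
    proof -
      have "(\<lambda>j. \<eta>'(j := \<eta>' j + 1) \<circ> \<pi>) = (\<lambda>j. (\<eta>' \<circ> \<pi>)(j := (\<eta>' \<circ> \<pi>) j + 1)) \<circ> inv \<pi>"
      proof (rule ext)
        fix j
        show "\<eta>'(j := \<eta>' j + 1) \<circ> \<pi> = ((\<lambda>j. (\<eta>' \<circ> \<pi>)(j := (\<eta>' \<circ> \<pi>) j + 1)) \<circ> inv \<pi>) j"
        proof (rule ext)
          fix i
          have h1: "\<pi> i = j \<longleftrightarrow> i = inv \<pi> j" using permutes_inv_eq[OF assms] by metis
          have h2: "\<pi> (inv \<pi> j) = j" using permutes_inverses(1)[OF assms] by metis
          show "(\<eta>'(j := \<eta>' j + 1) \<circ> \<pi>) i = ((\<lambda>j. (\<eta>' \<circ> \<pi>)(j := (\<eta>' \<circ> \<pi>) j + 1)) \<circ> inv \<pi>) j i"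
            using h1 h2 by auto
        qed
      qed
      then have "map_pmf (\<lambda>j. \<eta>'(j := \<eta>' j + 1) \<circ> \<pi>) (pmf_of_set {..<L})
          = map_pmf (\<lambda>j. (\<eta>' \<circ> \<pi>)(j := (\<eta>' \<circ> \<pi>) j + 1)) (map_pmf (inv \<pi>) (pmf_of_set {..<L}))"
        by (simp add: pmf.map_comp)
      also have "map_pmf (inv \<pi>) (pmf_of_set {..<L}) = pmf_of_set {..<L}"
        using pmf_of_set_lessThan_perm[OF ip] False by simp
      finally show ?thesis .
    qed
    have "map_pmf (\<lambda>\<eta>. \<eta> \<circ> \<pi>) (add_balls L (Suc K) \<zeta>)
        = bind_pmf (add_balls L K \<zeta>) (\<lambda>\<eta>'. map_pmf (\<lambda>j. \<eta>'(j := \<eta>' j + 1) \<circ> \<pi>) (pmf_of_set {..<L}))"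
      by (simp add: map_bind_pmf pmf.map_comp o_def)
    also have "\<dots> = bind_pmf (add_balls L K \<zeta>) (\<lambda>\<eta>'. map_pmf (\<lambda>j. (\<eta>' \<circ> \<pi>)(j := (\<eta>' \<circ> \<pi>) j + 1)) (pmf_of_set {..<L}))"
      using key by simp
    also have "\<dots> = bind_pmf (map_pmf (\<lambda>\<eta>. \<eta> \<circ> \<pi>) (add_balls L K \<zeta>)) (\<lambda>\<eta>'. map_pmf (\<lambda>j. \<eta>'(j := \<eta>' j + 1)) (pmf_of_set {..<L}))"
      by (simp add: bind_map_pmf)
    also have "\<dots> = add_balls L (Suc K) (\<zeta> \<circ> \<pi>)" using Suc unfolding comp_def by simp
    finally show ?thesis .
  qed
qed

lemma occ_perm:
  assumes "\<pi> permutes {..<L}"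
  shows "occ L (\<eta> \<circ> \<pi>) = occ L \<eta>"
proof -
  have lt: "j < L \<longleftrightarrow> \<pi> j < L" for j using assms
    by (metis lessThan_iff permutes_in_image)
  have "\<pi> ` {j. j < L \<and> 0 < (\<eta> \<circ> \<pi>) j} = {j. j < L \<and> 0 < \<eta> j}"
  proof
    show "\<pi> ` {j. j < L \<and> 0 < (\<eta> \<circ> \<pi>) j} \<subseteq> {j. j < L \<and> 0 < \<eta> j}" using lt by auto
    show "{j. j < L \<and> 0 < \<eta> j} \<subseteq> \<pi> ` {j. j < L \<and> 0 < (\<eta> \<circ> \<pi>) j}"
    proof
      fix y assume y: "y \<in> {j. j < L \<and> 0 < \<eta> j}"
      have e: "\<pi> (inv \<pi> y) = y" using permutes_inverses(1)[OF assms] by simp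
      then have "inv \<pi> y < L" using lt y by (metis mem_Collect_eq)
      then have "inv \<pi> y \<in> {j. j < L \<and> 0 < (\<eta> \<circ> \<pi>) j}" using e y by simp
      then show "y \<in> \<pi> ` {j. j < L \<and> 0 < (\<eta> \<circ> \<pi>) j}" using e by (metis image_eqI)
    qed
  qed
  moreover have "inj_on \<pi> {j. j < L \<and> 0 < (\<eta> \<circ> \<pi>) j}"
    using assms permutes_inj inj_on_subset by blast
  ultimately show ?thesis unfolding occ_def by (metis card_image)
qed

lemma rbb_step_perm:
  assumes "\<pi> permutes {..<L}"
  shows "map_pmf (\<lambda>\<eta>. \<eta> \<circ> \<pi>) (rbb_step L \<eta>) = rbb_step L (\<eta> \<circ> \<pi>)"
proof -
  have "(\<lambda>j. if j < L then (\<eta> \<circ> \<pi>) j - (if 0 < (\<eta> \<circ> \<pi>) j then 1 else 0) else 0)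
      = (\<lambda>j. if j < L then \<eta> j - (if 0 < \<eta> j then 1 else 0) else 0) \<circ> \<pi>"
  proof (rule ext)
    fix j
    have "j < L \<longleftrightarrow> \<pi> j < L" using assms by (metis lessThan_iff permutes_in_image)
    moreover have "\<not> j < L \<Longrightarrow> \<pi> j = j" using assms by (simp add: permutes_def)
    ultimately show "(if j < L then (\<eta> \<circ> \<pi>) j - (if 0 < (\<eta> \<circ> \<pi>) j then 1 else 0) else 0)
      = ((\<lambda>j. if j < L then \<eta> j - (if 0 < \<eta> j then 1 else 0) else 0) \<circ> \<pi>) j" by auto
  qed
  then show ?thesis unfolding rbb_step_def using occ_perm[OF assms] add_balls_perm[OF assms] by simp
qed

lemma rbb_law_perm:
  assumes "\<pi> permutes {..<L}" "map_pmf (\<lambda>\<eta>. \<eta> \<circ> \<pi>) init = init"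
  shows "map_pmf (\<lambda>\<eta>. \<eta> \<circ> \<pi>) (rbb_law L init t) = rbb_law L init t"
proof (induction t)
  case 0
  then show ?case using assms(2) by (simp add: comp_def)
next
  case (Suc t)
  have "map_pmf (\<lambda>\<eta>. \<eta> \<circ> \<pi>) (rbb_law L init (Suc t)) = bind_pmf (rbb_law L init t) (\<lambda>\<eta>. rbb_step L (\<eta> \<circ> \<pi>))"
    by (simp add: map_bind_pmf rbb_step_perm[OF assms(1)])
  also have "\<dots> = bind_pmf (map_pmf (\<lambda>\<eta>. \<eta> \<circ> \<pi>) (rbb_law L init t)) (rbb_step L)"
    by (simp add: bind_map_pmf)
  also have "\<dots> = rbb_law L init (Suc t)" using Suc unfolding comp_def by simp
  finally show ?case .
qed


lemma pmf_integrable_bdd: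
  fixes f :: "'a \<Rightarrow> real"
  assumes "\<And>x. \<bar>f x\<bar> \<le> B"
  shows "integrable (measure_pmf p) f"
  by (rule measure_pmf.integrable_const_bound[where B=B]) (use assms in auto)

lemma pmf_split_finite:
  fixes f :: "'a \<Rightarrow> real"
  assumes bd: "\<And>x. \<bar>f x\<bar> \<le> B" and F: "finite F"
  shows "\<bar>measure_pmf.expectation p f - (\<Sum>x\<in>F. f x * pmf p x)\<bar> \<le> B * (1 - (\<Sum>x\<in>F. pmf p x))"
proof -
  have B0: "0 \<le> B" using bd[of undefined] by linarith
  have i1: "integrable (measure_pmf p) (\<lambda>x. f x * indicator F x)"
    by (rule pmf_integrable_bdd[where B=B]) (use bd B0 in \<open>auto simp: indicator_def\<close>)
  have i2: "integrable (measure_pmf p) (\<lambda>x. f x * indicator (-F) x)"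
    by (rule pmf_integrable_bdd[where B=B]) (use bd B0 in \<open>auto simp: indicator_def\<close>)
  have sp: "f = (\<lambda>x. f x * indicator F x + f x * indicator (-F) x)"
    by (auto simp: indicator_def fun_eq_iff)
  have e1: "measure_pmf.expectation p (\<lambda>x. f x * indicator F x) = (\<Sum>x\<in>F. f x * pmf p x)"
    by (subst integral_measure_pmf_real[where A=F]) (auto simp: F indicator_def intro!: sum.cong)
  have "\<bar>measure_pmf.expectation p (\<lambda>x. f x * indicator (-F) x)\<bar>
      \<le> measure_pmf.expectation p (\<lambda>x. B * indicator (-F) x)"
  proof -
    have "\<bar>measure_pmf.expectation p (\<lambda>x. f x * indicator (-F) x)\<bar>
       \<le> measure_pmf.expectation p (\<lambda>x. \<bar>f x * indicator (-F) x\<bar>)"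
      by (rule integral_abs_bound)
    also have "\<dots> \<le> measure_pmf.expectation p (\<lambda>x. B * indicator (-F) x)"
    proof (rule integral_mono)
      show "integrable (measure_pmf p) (\<lambda>x. \<bar>f x * indicator (- F) x\<bar>)" using i2 by simp
      show "integrable (measure_pmf p) (\<lambda>x. B * indicator (- F) x)"
        by (rule pmf_integrable_bdd[where B=B]) (use B0 in \<open>auto simp: indicator_def\<close>)
      show "\<bar>f x * indicator (- F) x\<bar> \<le> B * indicator (- F) x" for x
        using bd[of x] by (auto simp: indicator_def)
    qed
    finally show ?thesis .
  qed
  also have "\<dots> = B * measure_pmf.prob p (-F)" by simp
  also have "measure_pmf.prob p (-F) = 1 - (\<Sum>x\<in>F. pmf p x)"
    using measure_pmf.prob_compl[of F p] F by (simp add: measure_measure_pmf_finite Compl_eq_Diff_UNIV)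
  finally have "\<bar>measure_pmf.expectation p (\<lambda>x. f x * indicator (-F) x)\<bar> \<le> B * (1 - (\<Sum>x\<in>F. pmf p x))" .
  moreover have "measure_pmf.expectation p f = (\<Sum>x\<in>F. f x * pmf p x) + measure_pmf.expectation p (\<lambda>x. f x * indicator (-F) x)"
    by (subst sp) (simp add: i1 i2 e1)
  ultimately show ?thesis by simp
qed

lemma pmf_big_finite:
  fixes q :: "'a::countable pmf"
  assumes "0 < e"
  shows "\<exists>F. finite F \<and> 1 - e < (\<Sum>x\<in>F. pmf q x)"
proof -
  define A where "A m = (from_nat ` {..<m} :: 'a set)" for m
  have "incseq A" unfolding A_def incseq_def by (auto intro: image_mono)
  moreover have "(\<Union>m. A m) = UNIV"
    unfolding A_def by (auto simp: image_iff) (metis from_nat_to_nat lessI lessThan_iff)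
  ultimately have "(\<lambda>m. measure_pmf.prob q (A m)) \<longlonglongrightarrow> measure_pmf.prob q UNIV"
    using measure_pmf.finite_Lim_measure_incseq[of A q] by auto
  then have "(\<lambda>m. measure_pmf.prob q (A m)) \<longlonglongrightarrow> 1" by simp
  then have "eventually (\<lambda>m. 1 - e < measure_pmf.prob q (A m)) sequentially"
    using assms by (intro order_tendstoD) auto
  then obtain m where "1 - e < measure_pmf.prob q (A m)" by (metis eventually_sequentially order.refl)
  moreover have "finite (A m)" unfolding A_def by simp
  ultimately show ?thesis by (metis measure_measure_pmf_finite)
qed

lemma scheffe:
  fixes p :: "nat \<Rightarrow> 'a::countable pmf" and f :: "'a \<Rightarrow> real"
  assumes conv: "\<And>x. (\<lambda>L. pmf (p L) x) \<longlonglongrightarrow> pmf q x" and bd: "\<And>x. \<bar>f x\<bar> \<le> B"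
  shows "(\<lambda>L. measure_pmf.expectation (p L) f) \<longlonglongrightarrow> measure_pmf.expectation q f"
proof (rule tendstoI)
  fix e :: real assume e: "0 < e"
  have B0: "0 \<le> B" using bd[of undefined] by linarith
  define \<epsilon> where "\<epsilon> = e / (4 * B + 4)"
  have \<epsilon>: "0 < \<epsilon>" using e B0 unfolding \<epsilon>_def by simp
  obtain F where F: "finite F" "1 - \<epsilon> < (\<Sum>x\<in>F. pmf q x)" using pmf_big_finite[OF \<epsilon>] by blast
  define R where "R L = \<bar>\<Sum>x\<in>F. f x * pmf (p L) x - f x * pmf q x\<bar> + B * (1 - (\<Sum>x\<in>F. pmf (p L) x))
       + B * (1 - (\<Sum>x\<in>F. pmf q x))" for L
  have "R \<longlonglongrightarrow> \<bar>\<Sum>x\<in>F. f x * pmf q x - f x * pmf q x\<bar> + B * (1 - (\<Sum>x\<in>F. pmf q x))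
       + B * (1 - (\<Sum>x\<in>F. pmf q x))"
    unfolding R_def by (intro tendsto_intros conv F)
  then have "R \<longlonglongrightarrow> 2 * B * (1 - (\<Sum>x\<in>F. pmf q x))" by (simp add: algebra_simps)
  moreover have "2 * B * (1 - (\<Sum>x\<in>F. pmf q x)) < e"
  proof -
    have "2 * B * (1 - (\<Sum>x\<in>F. pmf q x)) \<le> 2 * B * \<epsilon>" using F B0 by (intro mult_left_mono) auto
    also have "\<dots> < e" using e B0 unfolding \<epsilon>_def by (simp add: field_simps) (smt (verit) mult_nonneg_nonneg)
    finally show ?thesis .
  qed
  ultimately have ev: "eventually (\<lambda>L. R L < e) sequentially" by (rule order_tendstoD)
  have dR: "dist (measure_pmf.expectation (p L) f) (measure_pmf.expectation q f) \<le> R L" for L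
  proof -
    have a: "\<bar>measure_pmf.expectation (p L) f - (\<Sum>x\<in>F. f x * pmf (p L) x)\<bar> \<le> B * (1 - (\<Sum>x\<in>F. pmf (p L) x))"
      by (rule pmf_split_finite[OF bd F(1)])
    have b: "\<bar>measure_pmf.expectation q f - (\<Sum>x\<in>F. f x * pmf q x)\<bar> \<le> B * (1 - (\<Sum>x\<in>F. pmf q x))"
      by (rule pmf_split_finite[OF bd F(1)])
    have c: "(\<Sum>x\<in>F. f x * pmf (p L) x) - (\<Sum>x\<in>F. f x * pmf q x) = (\<Sum>x\<in>F. f x * pmf (p L) x - f x * pmf q x)"
      by (simp add: sum_subtractf)
    show ?thesis using a b c unfolding R_def dist_real_def by linarith
  qed
  show "eventually (\<lambda>L. dist (measure_pmf.expectation (p L) f) (measure_pmf.expectation q f) < e) sequentially"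
    using ev by (rule eventually_mono) (use dR in \<open>auto intro: le_less_trans\<close>)
qed


definition ff :: "real \<Rightarrow> nat \<Rightarrow> real" where "ff x s = (\<Prod>i<s. x - real i)"

lemma ff_0[simp]: "ff x 0 = 1" by (simp add: ff_def)
lemma ff_Suc: "ff x (Suc s) = ff x s * (x - real s)" by (simp add: ff_def)

lemma ff_zero: "K < s \<Longrightarrow> ff (real K) s = 0"
  unfolding ff_def by (rule prod_zero) auto

lemma ff_rec: "ff (x + 1) s = ff x s + real s * ff x (s - 1)"
proof (induction s)
  case 0 then show ?case by simp
next
  case (Suc s)
  show ?case
  proof (cases s)
    case 0 then show ?thesis by (simp add: ff_Suc)
  next
    case (Suc s')
    have "ff (x + 1) (Suc s) = (ff x s + real s * ff x (s - 1)) * (x + 1 - real s)"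
      using Suc.IH by (simp add: ff_Suc)
    also have "ff x s = ff x (s - 1) * (x - real (s - 1))" using Suc by (simp add: ff_Suc)
    also have "(ff x (s - 1) * (x - real (s - 1)) + real s * ff x (s - 1)) * (x + 1 - real s)
       = ff x (s - 1) * (x - real (s - 1)) * (x - real s) + real (Suc s) * (ff x (s - 1) * (x - real (s - 1)))"
      using Suc by (simp add: algebra_simps of_nat_diff)
    finally show ?thesis using Suc by (simp add: ff_Suc)
  qed
qed

definition Mb :: "nat \<Rightarrow> nat \<Rightarrow> nat \<Rightarrow> (nat \<Rightarrow> nat) \<Rightarrow> real" where
  "Mb L n K c = ff (real K) (\<Sum>k<n. c k) / (\<Prod>k<n. fact (c k)) * (1 / real L) ^ (\<Sum>k<n. c k)
      * (1 - real n / real L) ^ (K - (\<Sum>k<n. c k))"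

lemma sum_dec:
  fixes c :: "nat \<Rightarrow> nat" and n j :: nat
  assumes "j < n" "0 < c j"
  shows "(\<Sum>k<n. (c(j := c j - 1)) k) = (\<Sum>k<n. c k) - 1"
proof -
  have "(\<Sum>k<n. c k) = c j + (\<Sum>k\<in>{..<n}-{j}. c k)" using assms by (intro sum.remove) auto
  moreover have "(\<Sum>k<n. (c(j := c j - 1)) k) = (c(j := c j - 1)) j + (\<Sum>k\<in>{..<n}-{j}. (c(j := c j - 1)) k)"
    using assms by (intro sum.remove) auto
  ultimately show ?thesis using assms by simp
qed

lemma prod_dec:
  fixes c :: "nat \<Rightarrow> nat" and n j :: nat
  assumes "j < n" "0 < c j"
  shows "(\<Prod>k<n. fact ((c(j := c j - 1)) k) :: real) * real (c j) = (\<Prod>k<n. fact (c k))"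
proof -
  have "(\<Prod>k<n. fact (c k) :: real) = fact (c j) * (\<Prod>k\<in>{..<n}-{j}. fact (c k))"
    using assms by (intro prod.remove) auto
  moreover have "(\<Prod>k<n. fact ((c(j := c j - 1)) k) :: real) = fact ((c(j := c j - 1)) j) * (\<Prod>k\<in>{..<n}-{j}. fact ((c(j := c j - 1)) k))"
    using assms by (intro prod.remove) auto
  moreover have "(fact (c j) :: real) = real (c j) * fact (c j - 1)"
    using assms by (metis fact_reduce of_nat_fact of_nat_mult)
  ultimately show ?thesis by simp
qed

lemma Mb_rec:
  assumes "0 < L"
  shows "Mb L n (Suc K) c = (1 - real n / real L) * Mb L n K c
     + (1 / real L) * (\<Sum>j<n. if 0 < c j then Mb L n K (c(j := c j - 1)) else 0)"
proof -
  define s where "s = (\<Sum>k<n. c k)"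
  define C where "C = (\<Prod>k<n. fact (c k) :: real)"
  define r where "r = 1 / real L"
  define u where "u = 1 - real n / real L"
  have C0: "C > 0" unfolding C_def by (intro prod_pos) auto
  have tm: "(if 0 < c j then Mb L n K (c(j := c j - 1)) else 0)
     = real (c j) * (ff (real K) (s - 1) / C * r ^ (s - 1) * u ^ (K + 1 - s))" if "j < n" for j
  proof (cases "0 < c j")
    case True
    have "s \<ge> 1" unfolding s_def using True that
      by (metis One_nat_def Suc_leI finite_lessThan le_trans lessThan_iff member_le_sum zero_le)
    have p: "C = real (c j) * (\<Prod>k<n. fact ((c(j := c j - 1)) k) :: real)"
      using prod_dec[of j n c, OF that True] unfolding C_def by (simp add: mult.commute)
    have P0: "(\<Prod>k<n. fact ((c(j := c j - 1)) k) :: real) > 0" by (intro prod_pos) auto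
    have "K - (s - 1) = K + 1 - s" using \<open>s \<ge> 1\<close> by simp
    then show ?thesis using True P0 unfolding p Mb_def sum_dec[of j n c, OF that True] s_def[symmetric] r_def u_def
      by (simp add: field_simps)
  qed simp
  have "(\<Sum>j<n. if 0 < c j then Mb L n K (c(j := c j - 1)) else 0)
      = (\<Sum>j<n. real (c j)) * (ff (real K) (s - 1) / C * r ^ (s - 1) * u ^ (K + 1 - s))"
    by (simp add: tm sum_distrib_right sum_divide_distrib)
  also have "(\<Sum>j<n. real (c j)) = real s" unfolding s_def by simp
  finally have S: "(\<Sum>j<n. if 0 < c j then Mb L n K (c(j := c j - 1)) else 0)
      = real s * (ff (real K) (s - 1) / C * r ^ (s - 1) * u ^ (K + 1 - s))" .
  have A: "ff (real K) s * u ^ (Suc K - s) = u * (ff (real K) s * u ^ (K - s))"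
  proof (cases "s \<le> K")
    case True then show ?thesis by (simp add: Suc_diff_le)
  next
    case False then show ?thesis by (simp add: ff_zero)
  qed
  have B: "r * (real s * r ^ (s - 1)) = real s * r ^ s"
    by (cases s) auto
  have "Mb L n (Suc K) c = ff (real K + 1) s / C * r ^ s * u ^ (Suc K - s)"
    unfolding Mb_def s_def C_def r_def u_def by (simp add: add.commute)
  also have "\<dots> = (ff (real K) s * u ^ (Suc K - s) + real s * ff (real K) (s - 1) * u ^ (Suc K - s)) / C * r ^ s"
    by (simp only: ff_rec) (simp add: algebra_simps add_divide_distrib)
  also have "\<dots> = u * (ff (real K) s / C * r ^ s * u ^ (K - s))
      + r * (real s * (ff (real K) (s - 1) / C * r ^ (s - 1) * u ^ (K + 1 - s)))"
  proof -
    have e1: "(ff (real K) s * u ^ (Suc K - s)) / C * r ^ s = u * (ff (real K) s / C * r ^ s * u ^ (K - s))"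
      unfolding A by simp
    have e2: "(real s * ff (real K) (s - 1) * u ^ (Suc K - s)) / C * r ^ s
        = r * (real s * (ff (real K) (s - 1) / C * r ^ (s - 1) * u ^ (K + 1 - s)))"
    proof -
      have "(real s * ff (real K) (s - 1) * u ^ (Suc K - s)) / C * r ^ s
         = (r * (real s * r ^ (s - 1))) * (ff (real K) (s - 1) * u ^ (Suc K - s)) / C"
        unfolding B by simp
      then show ?thesis by simp
    qed
    show ?thesis unfolding add_divide_distrib distrib_right e1 e2 ..
  qed
  also have "\<dots> = u * Mb L n K c + r * (\<Sum>j<n. if 0 < c j then Mb L n K (c(j := c j - 1)) else 0)"
    unfolding S unfolding Mb_def s_def C_def r_def u_def by simp
  finally show ?thesis unfolding u_def r_def .
qed


lemma add_balls_mono: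
  assumes "0 < L"
  shows "\<eta> \<in> set_pmf (add_balls L K \<zeta>) \<Longrightarrow> \<zeta> j \<le> \<eta> j"
proof (induction K arbitrary: \<eta>)
  case 0 then show ?case by simp
next
  case (Suc K)
  then obtain \<eta>' i where "\<eta>' \<in> set_pmf (add_balls L K \<zeta>)" "\<eta> = \<eta>'(i := \<eta>' i + 1)"
    using assms by auto
  then show ?case using Suc.IH[of \<eta>'] by auto
qed

lemma prob_bind_pmf:
  "measure_pmf.prob (bind_pmf A f) E = measure_pmf.expectation A (\<lambda>x. measure_pmf.prob (f x) E)"
proof -
  have "measure_pmf.prob (bind_pmf A f) E = measure_pmf.expectation (bind_pmf A f) (indicator E)"
    by simp
  also have "\<dots> = measure_pmf.expectation A (\<lambda>x. measure_pmf.expectation (f x) (indicator E))"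
    by (rule integral_bind_pmf_bdd[where B=1]) (auto simp: indicator_def)
  finally show ?thesis by simp
qed

lemma add_balls_marg:
  assumes L: "0 < L" "n \<le> L"
  shows "measure_pmf.prob (add_balls L K \<zeta>) {\<eta>. \<forall>k<n. \<eta> k = \<zeta> k + c k} = Mb L n K c"
proof (induction K arbitrary: c)
  case 0
  show ?case
  proof (cases "\<forall>k<n. c k = 0")
    case True
    then have "(\<Sum>k<n. c k) = 0" by simp
    moreover have "(\<Prod>k<n. fact (c k) :: real) = 1" using True by simp
    ultimately show ?thesis using True by (simp add: Mb_def)
  next
    case False
    then have "0 < (\<Sum>k<n. c k)" by (metis finite_lessThan lessThan_iff sum_eq_0_iff neq0_conv)
    then have "Mb L n 0 c = 0" unfolding Mb_def using ff_zero[of 0, simplified] by simp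
    moreover have "\<zeta> \<notin> {\<eta>. \<forall>k<n. \<eta> k = \<zeta> k + c k}" using False by auto
    ultimately show ?thesis by (simp add: indicator_def)
  qed
next
  case (Suc K)
  define E where "E c = {\<eta>. \<forall>k<n. \<eta> k = \<zeta> k + c k}" for c
  define A where "A = add_balls L K \<zeta>"
  define h where "h \<eta>' = (1 - real n / real L) * indicator (E c) \<eta>'
      + (1 / real L) * (\<Sum>j<n. if 0 < c j then indicator (E (c(j := c j - 1))) \<eta>' else 0)" for \<eta>' :: config
  have pt: "measure_pmf.prob (map_pmf (\<lambda>j. \<eta>'(j := \<eta>' j + 1)) (pmf_of_set {..<L})) (E c) = h \<eta>'"
    if \<eta>': "\<eta>' \<in> set_pmf A" for \<eta>'
  proof -
    have ge: "\<zeta> j \<le> \<eta>' j" for j using add_balls_mono[OF L(1)] \<eta>' unfolding A_def by blast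
    define P where "P j = (\<eta>'(j := \<eta>' j + 1) \<in> E c)" for j
    have "measure_pmf.prob (map_pmf (\<lambda>j. \<eta>'(j := \<eta>' j + 1)) (pmf_of_set {..<L})) (E c)
        = real (card ({..<L} \<inter> {j. P j})) / real L"
      using L measure_pmf_of_set[of "{..<L}" "{j. P j}"] by (auto simp: P_def vimage_def Int_def)
    also have "real (card ({..<L} \<inter> {j. P j})) = (\<Sum>j<L. of_bool (P j))" by simp
    also have "\<dots> = (\<Sum>j<n. of_bool (P j)) + (\<Sum>j\<in>{n..<L}. of_bool (P j))"
    proof -
      have u: "{..<L} = {..<n} \<union> {n..<L}" using L by auto
      show ?thesis unfolding u by (rule sum.union_disjoint) auto
    qed
    also have "(\<Sum>j\<in>{n..<L}. of_bool (P j)) = (\<Sum>j\<in>{n..<L}. indicator (E c) \<eta>' :: real)"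
      by (intro sum.cong) (auto simp: P_def E_def indicator_def)
    also have "\<dots> = real (L - n) * indicator (E c) \<eta>'" by simp
    also have "(\<Sum>j<n. of_bool (P j)) = (\<Sum>j<n. if 0 < c j then indicator (E (c(j := c j - 1))) \<eta>' else 0 :: real)"
    proof (intro sum.cong refl)
      fix j assume j: "j \<in> {..<n}"
      have "P j \<longleftrightarrow> 0 < c j \<and> \<eta>' \<in> E (c(j := c j - 1))"
      proof
        assume "P j"
        then have a: "\<forall>k<n. (\<eta>'(j := \<eta>' j + 1)) k = \<zeta> k + c k" unfolding P_def E_def by simp
        then have "\<eta>' j + 1 = \<zeta> j + c j" using j by (metis fun_upd_same lessThan_iff)
        then have "0 < c j" using ge[of j] by linarith
        moreover have "\<eta>' \<in> E (c(j := c j - 1))" unfolding E_def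
        proof (intro CollectI allI impI)
          fix k assume k: "k < n"
          show "\<eta>' k = \<zeta> k + (c(j := c j - 1)) k"
          proof (cases "k = j")
            case True then show ?thesis using \<open>\<eta>' j + 1 = \<zeta> j + c j\<close> \<open>0 < c j\<close> by simp
          next
            case False then show ?thesis using a k by (metis fun_upd_other)
          qed
        qed
        ultimately show "0 < c j \<and> \<eta>' \<in> E (c(j := c j - 1))" by simp
      next
        assume a: "0 < c j \<and> \<eta>' \<in> E (c(j := c j - 1))"
        then show "P j" unfolding P_def E_def using j by auto
      qed
      then show "of_bool (P j) = (if 0 < c j then indicator (E (c(j := c j - 1))) \<eta>' else 0 :: real)"
        by (auto simp: indicator_def)
    qed
    finally have X: "measure_pmf.prob (map_pmf (\<lambda>j. \<eta>'(j := \<eta>' j + 1)) (pmf_of_set {..<L})) (E c)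
       = ((\<Sum>j<n. if 0 < c j then indicator (E (c(j := c j - 1))) \<eta>' else 0) + real (L - n) * indicator (E c) \<eta>') / real L" .
    have Y: "(S + real (L - n) * I) / real L = (1 - real n / real L) * I + (1 / real L) * S" for S I :: real
      using L by (simp add: field_simps of_nat_diff)
    show ?thesis unfolding X Y h_def ..
  qed
  have "measure_pmf.prob (add_balls L (Suc K) \<zeta>) (E c)
      = measure_pmf.expectation A (\<lambda>\<eta>'. measure_pmf.prob (map_pmf (\<lambda>j. \<eta>'(j := \<eta>' j + 1)) (pmf_of_set {..<L})) (E c))"
    unfolding A_def by (simp add: prob_bind_pmf)
  also have "\<dots> = measure_pmf.expectation A h"
    by (intro integral_cong_AE AE_pmfI pt) auto
  also have "\<dots> = (1 - real n / real L) * measure_pmf.prob A (E c)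
      + (1 / real L) * (\<Sum>j<n. if 0 < c j then measure_pmf.prob A (E (c(j := c j - 1))) else 0)"
  proof -
    define F where "F j = (if 0 < c j then E (c(j := c j - 1)) else {})" for j
    have int: "integrable (measure_pmf A) (\<lambda>x. indicator G x :: real)" for G
      by (rule measure_pmf.integrable_const_bound[where B=1]) (auto simp: indicator_def)
    have hh: "h = (\<lambda>x. (1 - real n / real L) * indicator (E c) x + (1 / real L) * (\<Sum>j<n. indicator (F j) x))"
      unfolding h_def F_def by (intro ext) (auto intro!: sum.cong)
    have "measure_pmf.expectation A h = (1 - real n / real L) * measure_pmf.expectation A (indicator (E c))
       + (1 / real L) * measure_pmf.expectation A (\<lambda>x. \<Sum>j<n. indicator (F j) x)"
    proof -
      have a1: "integrable (measure_pmf A) (\<lambda>x. (1 - real n / real L) * indicator (E c) x)"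
        by (intro integrable_mult_right int)
      have a2: "integrable (measure_pmf A) (\<lambda>x. (1 / real L) * (\<Sum>j<n. indicator (F j) x))"
      proof -
        have s: "integrable (measure_pmf A) (\<lambda>x. \<Sum>j<n. indicator (F j) x :: real)"
          by (rule Bochner_Integration.integrable_sum) (rule int)
        show ?thesis using s by simp
      qed
      show ?thesis unfolding hh Bochner_Integration.integral_add[OF a1 a2] integral_mult_right_zero ..
    qed
    also have "measure_pmf.expectation A (\<lambda>x. \<Sum>j<n. indicator (F j) x) = (\<Sum>j<n. measure_pmf.prob A (F j))"
      by (subst Bochner_Integration.integral_sum) (auto intro!: int)
    finally show ?thesis unfolding F_def by (auto intro!: sum.cong)
  qed
  also have "\<dots> = Mb L n (Suc K) c"
    unfolding Mb_rec[OF L(1)] A_def E_def Suc.IH by simp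
  finally show ?case unfolding E_def .
qed


lemma prod_diff_bound:
  fixes a b :: "nat \<Rightarrow> real"
  assumes "\<And>i. i < s \<Longrightarrow> \<bar>a i\<bar> \<le> 1" "\<And>i. i < s \<Longrightarrow> \<bar>b i\<bar> \<le> 1"
  shows "\<bar>(\<Prod>i<s. a i) - (\<Prod>i<s. b i)\<bar> \<le> (\<Sum>i<s. \<bar>a i - b i\<bar>)"
  using assms
proof (induction s)
  case 0 then show ?case by simp
next
  case (Suc s)
  have IH: "\<bar>(\<Prod>i<s. a i) - (\<Prod>i<s. b i)\<bar> \<le> (\<Sum>i<s. \<bar>a i - b i\<bar>)"
    using Suc.prems by (intro Suc.IH) auto
  have pa: "\<bar>\<Prod>i<s. a i\<bar> \<le> 1" using Suc.prems
    by (auto simp: abs_prod intro!: prod_le_1)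
  have pb: "\<bar>\<Prod>i<s. b i\<bar> \<le> 1" using Suc.prems
    by (auto simp: abs_prod intro!: prod_le_1)
  have "(\<Prod>i<Suc s. a i) - (\<Prod>i<Suc s. b i) = ((\<Prod>i<s. a i) - (\<Prod>i<s. b i)) * a s + (\<Prod>i<s. b i) * (a s - b s)"
    by (simp add: algebra_simps)
  then have "\<bar>(\<Prod>i<Suc s. a i) - (\<Prod>i<Suc s. b i)\<bar>
      \<le> \<bar>(\<Prod>i<s. a i) - (\<Prod>i<s. b i)\<bar> * \<bar>a s\<bar> + \<bar>\<Prod>i<s. b i\<bar> * \<bar>a s - b s\<bar>"
    by (metis abs_mult abs_triangle_ineq)
  also have "\<dots> \<le> \<bar>(\<Prod>i<s. a i) - (\<Prod>i<s. b i)\<bar> * 1 + 1 * \<bar>a s - b s\<bar>"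
    using Suc.prems pb by (intro add_mono mult_mono) auto
  also have "\<dots> \<le> (\<Sum>i<Suc s. \<bar>a i - b i\<bar>)" using IH by simp
  finally show ?case .
qed

lemma power_diff_bound01:
  fixes x y :: real
  assumes "0 \<le> x" "x \<le> 1" "0 \<le> y" "y \<le> 1"
  shows "\<bar>x ^ K - y ^ K\<bar> \<le> real K * \<bar>x - y\<bar>"
proof (induction K)
  case 0 then show ?case by simp
next
  case (Suc K)
  have "x ^ Suc K - y ^ Suc K = x * (x ^ K - y ^ K) + y ^ K * (x - y)" by (simp add: algebra_simps)
  then have "\<bar>x ^ Suc K - y ^ Suc K\<bar> \<le> x * \<bar>x ^ K - y ^ K\<bar> + y ^ K * \<bar>x - y\<bar>"
    using assms by (metis abs_mult abs_of_nonneg abs_triangle_ineq zero_le_power)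
  also have "\<dots> \<le> 1 * (real K * \<bar>x - y\<bar>) + 1 * \<bar>x - y\<bar>"
    using assms Suc by (intro add_mono mult_mono) (auto intro: power_le_one)
  finally show ?case by (simp add: algebra_simps)
qed

lemma exp_neg_upper:
  fixes y :: real assumes "0 \<le> y"
  shows "exp (- y) \<le> 1 - y + y ^ 2"
proof -
  have "1 + y \<le> exp y" by (rule exp_ge_add_one_self)
  then have "exp (- y) * (1 + y) \<le> exp (- y) * exp y" by (intro mult_left_mono) auto
  then have a: "exp (- y) * (1 + y) \<le> 1" by (simp add: exp_minus field_simps)
  have "(1 - y + y ^ 2) * (1 + y) = 1 + y ^ 3" by (simp add: algebra_simps power2_eq_square power3_eq_cube)
  then have "1 \<le> (1 - y + y ^ 2) * (1 + y)" using assms by simp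
  with a have "exp (- y) * (1 + y) \<le> (1 - y + y ^ 2) * (1 + y)" by linarith
  then show ?thesis using assms by (simp add: mult_le_cancel_right_pos)
qed

lemma exp_lip0:
  fixes a b :: real assumes "a \<le> 0" "b \<le> 0"
  shows "\<bar>exp a - exp b\<bar> \<le> \<bar>a - b\<bar>"
proof -
  have *: "exp q - exp p \<le> q - p" if "p \<le> q" "q \<le> 0" for p q :: real
  proof -
    have "1 + (p - q) \<le> exp (p - q)" by (rule exp_ge_add_one_self)
    then have "1 - exp (p - q) \<le> q - p" by linarith
    then have "exp q * (1 - exp (p - q)) \<le> exp q * (q - p)" by (intro mult_left_mono) auto
    also have "\<dots> \<le> 1 * (q - p)" using that by (intro mult_right_mono) auto
    finally show ?thesis by (simp add: algebra_simps exp_diff)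
  qed
  show ?thesis
  proof (cases "a \<le> b")
    case True then show ?thesis using *[of a b] assms by auto
  next
    case False then show ?thesis using *[of b a] assms by auto
  qed
qed

definition gpo :: "nat \<Rightarrow> (nat \<Rightarrow> nat) \<Rightarrow> real \<Rightarrow> real" where
  "gpo n c x = x ^ (\<Sum>k<n. c k) * exp (- (real n * x)) / (\<Prod>k<n. fact (c k))"

lemma gpo_lip:
  assumes "0 \<le> x" "x \<le> 1" "0 \<le> y" "y \<le> 1"
  shows "\<bar>gpo n c x - gpo n c y\<bar> \<le> real ((\<Sum>k<n. c k) + n) * \<bar>x - y\<bar>"
proof -
  define s where "s = (\<Sum>k<n. c k)"
  define C where "C = (\<Prod>k<n. fact (c k) :: real)"
  have C1: "1 \<le> C" unfolding C_def by (intro prod_ge_1) auto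
  have e: "\<bar>exp (- (real n * x)) - exp (- (real n * y))\<bar> \<le> real n * \<bar>x - y\<bar>"
  proof -
    have "\<bar>exp (- (real n * x)) - exp (- (real n * y))\<bar> \<le> \<bar>- (real n * x) - - (real n * y)\<bar>"
      using assms by (intro exp_lip0) auto
    also have "\<dots> = \<bar>real n * (y - x)\<bar>" by (simp add: algebra_simps)
    also have "\<dots> = real n * \<bar>x - y\<bar>" by (simp add: abs_mult abs_minus_commute)
    finally show ?thesis .
  qed
  have "x ^ s * exp (- (real n * x)) - y ^ s * exp (- (real n * y))
     = (x ^ s - y ^ s) * exp (- (real n * x)) + y ^ s * (exp (- (real n * x)) - exp (- (real n * y)))"
    by (simp add: algebra_simps)
  then have "\<bar>x ^ s * exp (- (real n * x)) - y ^ s * exp (- (real n * y))\<bar>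
     \<le> \<bar>x ^ s - y ^ s\<bar> * exp (- (real n * x)) + y ^ s * \<bar>exp (- (real n * x)) - exp (- (real n * y))\<bar>"
    using assms by (metis abs_mult abs_of_nonneg abs_triangle_ineq exp_ge_zero zero_le_power)
  also have "\<dots> \<le> (real s * \<bar>x - y\<bar>) * 1 + 1 * (real n * \<bar>x - y\<bar>)"
  proof (intro add_mono mult_mono)
    show "\<bar>x ^ s - y ^ s\<bar> \<le> real s * \<bar>x - y\<bar>" using assms by (rule power_diff_bound01)
    show "exp (- (real n * x)) \<le> 1" using assms by simp
    show "y ^ s \<le> 1" using assms by (simp add: power_le_one)
  qed (use e assms in auto)
  finally have X: "\<bar>x ^ s * exp (- (real n * x)) - y ^ s * exp (- (real n * y))\<bar> \<le> real (s + n) * \<bar>x - y\<bar>"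
    by (simp add: algebra_simps)
  have "\<bar>gpo n c x - gpo n c y\<bar> = \<bar>x ^ s * exp (- (real n * x)) - y ^ s * exp (- (real n * y))\<bar> / C"
    unfolding gpo_def s_def[symmetric] C_def[symmetric] using C1 by (simp add: diff_divide_distrib[symmetric])
  also have "\<dots> \<le> \<bar>x ^ s * exp (- (real n * x)) - y ^ s * exp (- (real n * y))\<bar>"
    using C1 divide_left_mono[of 1 C "\<bar>x ^ s * exp (- (real n * x)) - y ^ s * exp (- (real n * y))\<bar>"] by simp
  finally show ?thesis using X unfolding s_def by linarith
qed


lemma Mb_approx:
  fixes n L K :: nat and c :: "nat \<Rightarrow> nat"
  assumes L: "n + (\<Sum>k<n. c k) < L" and K: "K \<le> L"
  shows "\<bar>Mb L n K c - gpo n c (real K / real L)\<bar>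
     \<le> real ((\<Sum>k<n. c k) * (\<Sum>k<n. c k)) / real L + (1 / (1 - real n / real L) ^ (\<Sum>k<n. c k) - 1)
        + real (n * n) / real L"
proof -
  define s where "s = (\<Sum>k<n. c k)"
  define C where "C = (\<Prod>k<n. fact (c k) :: real)"
  define x where "x = real K / real L"
  define y where "y = real n / real L"
  define u where "u = 1 - y"
  define A where "A = ff (real K) s / real L ^ s"
  define B where "B = u ^ (K - s)"
  define a where "a = x ^ s"
  define b where "b = exp (- (real n * x))"
  have Lpos: "0 < real L" using L by simp
  have C1: "1 \<le> C" unfolding C_def by (intro prod_ge_1) auto
  have x01: "0 \<le> x" "x \<le> 1" unfolding x_def using K Lpos by (auto simp: divide_le_eq_1)
  have y01: "0 \<le> y" "y < 1" unfolding y_def using L Lpos by (auto simp: divide_less_eq_1)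
  have u01: "0 < u" "u \<le> 1" unfolding u_def using y01 by auto
  have a01: "0 \<le> a" "a \<le> 1" unfolding a_def using x01 by (auto simp: power_le_one)
  have b01: "0 \<le> b" "b \<le> 1" unfolding b_def using x01 by auto
  have B01: "0 \<le> B" "B \<le> 1" unfolding B_def using u01 by (auto simp: power_le_one)
  have Mb_eq: "Mb L n K c = A * B / C"
    unfolding Mb_def A_def B_def C_def s_def[symmetric] u_def y_def by (simp add: power_one_over)
  have g_eq: "gpo n c (real K / real L) = a * b / C"
    unfolding gpo_def a_def b_def C_def s_def[symmetric] x_def by simp
  have Aa: "\<bar>A - a\<bar> \<le> real (s * s) / real L"
  proof -
    have "A = (\<Prod>i<s. (real K - real i) / real L)"
      unfolding A_def ff_def by (simp add: prod_dividef)
    moreover have "a = (\<Prod>i<s. x)" unfolding a_def by simp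
    ultimately have "\<bar>A - a\<bar> \<le> (\<Sum>i<s. \<bar>(real K - real i) / real L - x\<bar>)"
    proof -
      assume e1: "A = (\<Prod>i<s. (real K - real i) / real L)" and e2: "a = (\<Prod>i<s. x)"
      show ?thesis unfolding e1 e2
      proof (rule prod_diff_bound)
        fix i assume i: "i < s"
        have "s < L" using L unfolding s_def by simp
        then have "real i \<le> real L" using i by simp
        then show "\<bar>(real K - real i) / real L\<bar> \<le> 1" using K Lpos
          by (auto simp: abs_le_iff divide_le_eq_1 field_simps)
        show "\<bar>x\<bar> \<le> 1" using x01 by simp
      qed
    qed
    also have "\<dots> = (\<Sum>i<s. real i / real L)"
      unfolding x_def using Lpos by (intro sum.cong) (auto simp: field_simps)
    also have "\<dots> \<le> (\<Sum>i<s. real s / real L)"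
      using Lpos by (intro sum_mono) (auto simp: divide_right_mono)
    also have "\<dots> = real (s * s) / real L" by simp
    finally show ?thesis .
  qed
  have main: "\<bar>A * B - a * b\<bar> \<le> real (s * s) / real L + (1 / u ^ s - 1) + real (n * n) / real L"
  proof (cases "K < s")
    case True
    then have "A = 0" unfolding A_def by (simp add: ff_zero)
    then have "\<bar>A * B - a * b\<bar> = a * b" using a01 b01 by simp
    also have "\<dots> \<le> a" using a01 b01 by (simp add: mult_left_le)
    also have "\<dots> = \<bar>A - a\<bar>" using \<open>A = 0\<close> a01 by simp
    also have "\<dots> \<le> real (s * s) / real L" by (rule Aa)
    also have "\<dots> \<le> real (s * s) / real L + (1 / u ^ s - 1) + real (n * n) / real L"
    proof -
      have "1 \<le> 1 / u ^ s" using u01 by (simp add: power_le_one field_simps)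
      moreover have "0 \<le> real (n * n) / real L" by simp
      ultimately show ?thesis by linarith
    qed
    finally show ?thesis .
  next
    case False
    have Bb: "\<bar>B - b\<bar> \<le> (1 / u ^ s - 1) + real (n * n) / real L"
    proof -
      have B': "B = u ^ K / u ^ s" unfolding B_def using False u01 by (simp add: power_diff)
      have b': "b = exp (- y) ^ K"
        unfolding b_def x_def y_def by (simp add: exp_of_nat_mult[symmetric] field_simps)
      have "\<bar>u ^ K / u ^ s - u ^ K\<bar> = u ^ K * (1 / u ^ s - 1)"
      proof -
        have "1 \<le> 1 / u ^ s" using u01 by (simp add: power_le_one field_simps)
        then show ?thesis using u01 by (simp add: field_simps abs_if)
      qed
      also have "\<dots> \<le> 1 * (1 / u ^ s - 1)"
        using u01 by (intro mult_right_mono) (auto simp: power_le_one field_simps)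
      finally have t1: "\<bar>u ^ K / u ^ s - u ^ K\<bar> \<le> 1 / u ^ s - 1" by simp
      have "\<bar>u ^ K - exp (- y) ^ K\<bar> \<le> real K * \<bar>u - exp (- y)\<bar>"
        using u01 y01 by (intro power_diff_bound01) auto
      also have "\<bar>u - exp (- y)\<bar> \<le> y ^ 2"
        using exp_neg_upper[of y] exp_ge_add_one_self[of "- y"] y01 unfolding u_def by auto
      then have "real K * \<bar>u - exp (- y)\<bar> \<le> real K * y ^ 2" by (intro mult_left_mono) auto
      also have "\<dots> \<le> real L * y ^ 2" using K by (intro mult_right_mono) auto
      also have "\<dots> = real (n * n) / real L" unfolding y_def using Lpos by (simp add: power2_eq_square field_simps)
      finally have t2: "\<bar>u ^ K - exp (- y) ^ K\<bar> \<le> real (n * n) / real L" .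
      show ?thesis unfolding B' b' using t1 t2 by linarith
    qed
    have "A * B - a * b = (A - a) * B + a * (B - b)" by (simp add: algebra_simps)
    then have "\<bar>A * B - a * b\<bar> \<le> \<bar>A - a\<bar> * B + a * \<bar>B - b\<bar>"
      using a01 B01 by (metis abs_mult abs_of_nonneg abs_triangle_ineq)
    also have "\<dots> \<le> \<bar>A - a\<bar> * 1 + 1 * \<bar>B - b\<bar>"
      using a01 B01 by (intro add_mono mult_mono) auto
    also have "\<dots> = \<bar>A - a\<bar> + \<bar>B - b\<bar>" by simp
    finally show ?thesis using Aa Bb by linarith
  qed
  have "\<bar>Mb L n K c - gpo n c (real K / real L)\<bar> = \<bar>A * B - a * b\<bar> / C"
    unfolding Mb_eq g_eq using C1 by (simp add: diff_divide_distrib[symmetric])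
  also have "\<dots> \<le> \<bar>A * B - a * b\<bar>"
    using C1 divide_left_mono[of 1 C "\<bar>A * B - a * b\<bar>"] by simp
  finally show ?thesis using main unfolding s_def u_def y_def by linarith
qed

lemma Mb_delta_lim:
  "(\<lambda>L::nat. real (s * s) / real L + (1 / (1 - real n / real L) ^ s - 1) + real (n * n) / real L) \<longlonglongrightarrow> 0"
  by real_asymp


lemma exch_prob:
  assumes inv: "\<And>\<pi>. \<pi> permutes {..<L} \<Longrightarrow> map_pmf (\<lambda>\<eta>. \<eta> \<circ> \<pi>) M = M"
    and "\<pi> permutes {..<L}"
  shows "measure_pmf.prob M {\<eta>. P (\<eta> \<circ> \<pi>)} = measure_pmf.prob M {\<eta>. P \<eta>}"
proof -
  have "measure_pmf.prob M {\<eta>. P \<eta>} = measure_pmf.prob (map_pmf (\<lambda>\<eta>. \<eta> \<circ> \<pi>) M) {\<eta>. P \<eta>}"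
    using inv[OF assms(2)] by simp
  also have "\<dots> = measure_pmf.prob M {\<eta>. P (\<eta> \<circ> \<pi>)}" by (simp add: vimage_def)
  finally show ?thesis by simp
qed

lemma exch_single:
  fixes M :: "config pmf"
  assumes inv: "\<And>\<pi>. \<pi> permutes {..<L} \<Longrightarrow> map_pmf (\<lambda>\<eta>. \<eta> \<circ> \<pi>) M = M" and j: "j < L"
  shows "measure_pmf.prob M {\<eta>. 0 < \<eta> j} = measure_pmf.prob M {\<eta>. 0 < \<eta> 0}"
proof -
  have p: "Transposition.transpose 0 j permutes {..<L}" using j by (intro permutes_swap_id) auto
  have "measure_pmf.prob M {\<eta>. 0 < (\<eta> \<circ> Transposition.transpose 0 j) 0} = measure_pmf.prob M {\<eta>. 0 < \<eta> 0}"
    by (rule exch_prob[OF inv p, where P="\<lambda>\<eta>. 0 < \<eta> 0"])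
  then show ?thesis by simp
qed

lemma exch_pair:
  fixes M :: "config pmf"
  assumes inv: "\<And>\<pi>. \<pi> permutes {..<L} \<Longrightarrow> map_pmf (\<lambda>\<eta>. \<eta> \<circ> \<pi>) M = M"
    and ij: "i < L" "j < L" "i \<noteq> j"
  shows "measure_pmf.prob M {\<eta>. 0 < \<eta> i \<and> 0 < \<eta> j} = measure_pmf.prob M {\<eta>. 0 < \<eta> 0 \<and> 0 < \<eta> 1}"
proof -
  define t where "t = Transposition.transpose 0 i j"
  define \<pi> where "\<pi> = Transposition.transpose 0 i \<circ> Transposition.transpose 1 t"
  have L1: "1 < L" using ij by linarith
  have tL: "t < L" unfolding t_def using ij by (auto simp: Transposition.transpose_def)
  have t0: "t \<noteq> 0" unfolding t_def using ij by (auto simp: Transposition.transpose_def)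
  have p: "\<pi> permutes {..<L}" unfolding \<pi>_def
    using ij tL L1 by (intro permutes_compose permutes_swap_id) auto
  have \<pi>0: "\<pi> 0 = i" unfolding \<pi>_def using t0 by (simp add: Transposition.transpose_def)
  have \<pi>1: "\<pi> 1 = j" unfolding \<pi>_def t_def by simp
  have "measure_pmf.prob M {\<eta>. 0 < (\<eta> \<circ> \<pi>) 0 \<and> 0 < (\<eta> \<circ> \<pi>) 1} = measure_pmf.prob M {\<eta>. 0 < \<eta> 0 \<and> 0 < \<eta> 1}"
    by (rule exch_prob[OF inv p, where P="\<lambda>\<eta>. 0 < \<eta> 0 \<and> 0 < \<eta> 1"])
  then show ?thesis using \<pi>0 \<pi>1 by simp
qed

lemma occ_le: "occ L \<eta> \<le> L"
proof -
  have "occ L \<eta> \<le> card {..<L}" unfolding occ_def by (intro card_mono) auto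
  then show ?thesis by simp
qed

lemma occ_sum: "real (occ L \<eta>) = (\<Sum>j<L. indicator {\<eta>. 0 < \<eta> j} \<eta>)"
proof -
  have "{j. j < L \<and> 0 < \<eta> j} = {..<L} \<inter> {j. 0 < \<eta> j}" by auto
  then show ?thesis unfolding occ_def by (simp add: indicator_def of_bool_def[symmetric])
qed

lemma occ_moments:
  fixes M :: "config pmf" and r :: real
  assumes inv: "\<And>\<pi>. \<pi> permutes {..<L} \<Longrightarrow> map_pmf (\<lambda>\<eta>. \<eta> \<circ> \<pi>) M = M" and L: "1 < L"
  shows "measure_pmf.expectation M (\<lambda>\<eta>. (real (occ L \<eta>) / real L - r) ^ 2)
    = (measure_pmf.prob M {\<eta>. 0 < \<eta> 0} + (real L - 1) * measure_pmf.prob M {\<eta>. 0 < \<eta> 0 \<and> 0 < \<eta> 1}) / real L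
      - 2 * r * measure_pmf.prob M {\<eta>. 0 < \<eta> 0} + r ^ 2"
proof -
  define p1 where "p1 = measure_pmf.prob M {\<eta>. 0 < \<eta> 0}"
  define p2 where "p2 = measure_pmf.prob M {\<eta>. 0 < \<eta> 0 \<and> 0 < \<eta> 1}"
  define S where "S j = {\<eta> :: config. 0 < \<eta> j}" for j
  have int: "integrable (measure_pmf M) (\<lambda>x. indicator G x :: real)" for G
    by (rule measure_pmf.integrable_const_bound[where B=1]) (auto simp: indicator_def)
  have E1: "measure_pmf.expectation M (\<lambda>\<eta>. real (occ L \<eta>)) = real L * p1"
  proof -
    have "measure_pmf.expectation M (\<lambda>\<eta>. real (occ L \<eta>)) = measure_pmf.expectation M (\<lambda>\<eta>. \<Sum>j<L. indicator (S j) \<eta>)"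
      unfolding occ_sum S_def ..
    also have "\<dots> = (\<Sum>j<L. measure_pmf.prob M (S j))"
      by (subst Bochner_Integration.integral_sum) (auto intro!: int)
    also have "\<dots> = (\<Sum>j<L. p1)"
      unfolding S_def p1_def using inv by (intro sum.cong refl exch_single) auto
    finally show ?thesis by simp
  qed
  have E2: "measure_pmf.expectation M (\<lambda>\<eta>. real (occ L \<eta>) ^ 2) = real L * p1 + real L * (real L - 1) * p2"
  proof -
    have sq: "real (occ L \<eta>) ^ 2 = (\<Sum>i<L. \<Sum>j<L. indicator (S i \<inter> S j) \<eta>)" for \<eta>
      unfolding occ_sum power2_eq_square sum_product S_def by (simp add: indicator_inter_arith)
    have "measure_pmf.expectation M (\<lambda>\<eta>. real (occ L \<eta>) ^ 2)
        = (\<Sum>i<L. \<Sum>j<L. measure_pmf.prob M (S i \<inter> S j))"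
      unfolding sq
      by (subst Bochner_Integration.integral_sum, rule Bochner_Integration.integrable_sum, rule int)
         (subst Bochner_Integration.integral_sum, auto intro!: int)
    also have "\<dots> = (\<Sum>i<L. p1 + (real L - 1) * p2)"
    proof (intro sum.cong refl)
      fix i assume i: "i \<in> {..<L}"
      have "(\<Sum>j<L. measure_pmf.prob M (S i \<inter> S j)) = measure_pmf.prob M (S i \<inter> S i)
          + (\<Sum>j\<in>{..<L}-{i}. measure_pmf.prob M (S i \<inter> S j))"
        using i by (intro sum.remove) auto
      also have "measure_pmf.prob M (S i \<inter> S i) = p1"
        unfolding S_def p1_def using i by simp (rule exch_single[where L=L], rule inv, auto)
      also have "(\<Sum>j\<in>{..<L}-{i}. measure_pmf.prob M (S i \<inter> S j)) = (\<Sum>j\<in>{..<L}-{i}. p2)"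
      proof (intro sum.cong refl)
        fix j assume "j \<in> {..<L} - {i}"
        then have "S i \<inter> S j = {\<eta>. 0 < \<eta> i \<and> 0 < \<eta> j}" "j < L" "i \<noteq> j" unfolding S_def by auto
        note jj = this
        have X: "measure_pmf.prob M {\<eta>. 0 < \<eta> i \<and> 0 < \<eta> j} = measure_pmf.prob M {\<eta>. 0 < \<eta> 0 \<and> 0 < \<eta> 1}"
          by (rule exch_pair[where L=L]) (use inv jj i in auto)
        show "measure_pmf.prob M (S i \<inter> S j) = p2" unfolding p2_def jj(1) X ..
      qed
      also have "\<dots> = (real L - 1) * p2" using i by (simp add: of_nat_diff)
      finally show "(\<Sum>j<L. measure_pmf.prob M (S i \<inter> S j)) = p1 + (real L - 1) * p2" .
    qed
    finally show ?thesis by (simp add: algebra_simps)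
  qed
  have b: "\<bar>real (occ L \<eta>)\<bar> \<le> real L" for \<eta> using occ_le[of L \<eta>] by simp
  have b2: "\<bar>real (occ L \<eta>) ^ 2\<bar> \<le> real L ^ 2" for \<eta> using occ_le[of L \<eta>] by (simp add: power_mono)
  have i1: "integrable (measure_pmf M) (\<lambda>\<eta>. real (occ L \<eta>))" by (rule pmf_integrable_bdd[OF b])
  have i2: "integrable (measure_pmf M) (\<lambda>\<eta>. real (occ L \<eta>) ^ 2)" by (rule pmf_integrable_bdd[OF b2])
  have ex: "(real (occ L \<eta>) / real L - r) ^ 2
     = (1 / real L ^ 2) * real (occ L \<eta>) ^ 2 + (- 2 * r / real L) * real (occ L \<eta>) + r ^ 2" for \<eta>
    using L by (simp add: power2_eq_square field_simps)
  have "measure_pmf.expectation M (\<lambda>\<eta>. (real (occ L \<eta>) / real L - r) ^ 2)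
     = (1 / real L ^ 2) * measure_pmf.expectation M (\<lambda>\<eta>. real (occ L \<eta>) ^ 2)
       + (- 2 * r / real L) * measure_pmf.expectation M (\<lambda>\<eta>. real (occ L \<eta>)) + r ^ 2"
    unfolding ex using i1 i2 by simp
  also have "\<dots> = (p1 + (real L - 1) * p2) / real L - 2 * r * p1 + r ^ 2"
    unfolding E1 E2 using L by (simp add: field_simps power2_eq_square)
  finally show ?thesis unfolding p1_def p2_def .
qed


fun iid :: "nat \<Rightarrow> 'a pmf \<Rightarrow> 'a list pmf" where
  "iid 0 q = return_pmf []"
| "iid (Suc n) q = bind_pmf (iid n q) (\<lambda>zs. map_pmf (\<lambda>z. zs @ [z]) q)"

lemma pmf_bind_snoc:
  "pmf (bind_pmf N (\<lambda>xs. map_pmf (\<lambda>y. xs @ [h xs y]) (P xs))) w =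
     (if w = [] then 0 else pmf N (butlast w) * measure_pmf.prob (P (butlast w)) {y. h (butlast w) y = last w})"
proof (cases "w = []")
  case True
  then show ?thesis by (simp add: pmf_bind pmf_map vimage_def)
next
  case False
  have "pmf (bind_pmf N (\<lambda>xs. map_pmf (\<lambda>y. xs @ [h xs y]) (P xs))) w
      = measure_pmf.expectation N (\<lambda>xs. measure_pmf.prob (P xs) {y. xs @ [h xs y] = w})"
    by (simp add: pmf_bind pmf_map vimage_def)
  also have "\<dots> = measure_pmf.expectation N (\<lambda>xs. indicator {butlast w} xs *
        measure_pmf.prob (P (butlast w)) {y. h (butlast w) y = last w})"
  proof (intro Bochner_Integration.integral_cong refl)
    fix xs
    show "measure_pmf.prob (P xs) {y. xs @ [h xs y] = w} = indicator {butlast w} xs *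
        measure_pmf.prob (P (butlast w)) {y. h (butlast w) y = last w}"
    proof (cases "xs = butlast w")
      case True
      then have "{y. xs @ [h xs y] = w} = {y. h (butlast w) y = last w}"
        using False by (auto simp: snoc_eq_iff_butlast)
      then show ?thesis using True by simp
    next
      case F: False
      then have "{y. xs @ [h xs y] = w} = {}" using False by (auto simp: snoc_eq_iff_butlast)
      then show ?thesis using F by simp
    qed
  qed
  also have "\<dots> = pmf N (butlast w) * measure_pmf.prob (P (butlast w)) {y. h (butlast w) y = last w}"
    by (simp add: measure_pmf_single)
  finally show ?thesis using False by simp
qed

lemma set_pmf_iid: "zs \<in> set_pmf (iid n q) \<Longrightarrow> length zs = n"
  by (induction n arbitrary: zs) auto

lemma pmf_iid: "pmf (iid n q) z = (if length z = n then (\<Prod>k<n. pmf q (z ! k)) else 0)"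
proof (induction n arbitrary: z)
  case 0
  then show ?case by (simp add: pmf_return indicator_def)
next
  case (Suc n)
  show ?case
  proof (cases "z = []")
    case True then show ?thesis by (simp add: pmf_bind_snoc[where h="\<lambda>_ y. y", simplified])
  next
    case False
    have "pmf (iid (Suc n) q) z = pmf (iid n q) (butlast z) * pmf q (last z)"
      using False pmf_bind_snoc[of "iid n q" "\<lambda>_ y. y" "\<lambda>_. q" z]
      by (simp add: measure_pmf_single)
    also have "\<dots> = (if length z = Suc n then (\<Prod>k<Suc n. pmf q (z ! k)) else 0)"
    proof (cases "length z = Suc n")
      case True
      have "(\<Prod>k<n. pmf q (butlast z ! k)) = (\<Prod>k<n. pmf q (z ! k))"
        using True by (intro prod.cong refl) (simp add: nth_butlast)
      moreover have "last z = z ! n" using True False by (simp add: last_conv_nth)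
      ultimately show ?thesis using True Suc.IH[of "butlast z"] by simp
    next
      case F: False
      then have "length (butlast z) \<noteq> n" using False by auto
      then show ?thesis using F Suc.IH[of "butlast z"] by simp
    qed
    finally show ?thesis .
  qed
qed

lemma prod_abs_bound:
  fixes f :: "nat \<Rightarrow> 'a \<Rightarrow> real"
  assumes "\<And>k x. k < n \<Longrightarrow> \<bar>f k x\<bar> \<le> B k"
  shows "\<bar>\<Prod>k<n. f k (z k)\<bar> \<le> (\<Prod>k<n. B k)"
  unfolding abs_prod by (rule prod_mono) (use assms in auto)

lemma iid_prod:
  fixes f :: "nat \<Rightarrow> 'a \<Rightarrow> real"
  assumes "\<And>k x. k < n \<Longrightarrow> \<bar>f k x\<bar> \<le> B k"
  shows "measure_pmf.expectation (iid n q) (\<lambda>z. \<Prod>k<n. f k (z ! k)) = (\<Prod>k<n. measure_pmf.expectation q (f k))"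
  using assms
proof (induction n)
  case 0
  then show ?case by simp
next
  case (Suc n)
  have bd: "\<bar>\<Prod>k<Suc n. f k (z ! k)\<bar> \<le> (\<Prod>k<Suc n. B k)" for z
    by (rule prod_abs_bound[where z="\<lambda>k. z ! k"]) (use Suc.prems in auto)
  have "measure_pmf.expectation (iid (Suc n) q) (\<lambda>z. \<Prod>k<Suc n. f k (z ! k))
     = measure_pmf.expectation (iid n q) (\<lambda>zs. measure_pmf.expectation q (\<lambda>z. \<Prod>k<Suc n. f k ((zs @ [z]) ! k)))"
    by (simp only: iid.simps integral_bind_pmf_bdd[OF bd] integral_map_pmf)
  also have "\<dots> = measure_pmf.expectation (iid n q) (\<lambda>zs. (\<Prod>k<n. f k (zs ! k)) * measure_pmf.expectation q (f n))"
  proof (intro integral_cong_AE AE_pmfI)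
    fix zs assume "zs \<in> set_pmf (iid n q)"
    then have l: "length zs = n" by (rule set_pmf_iid)
    have "(\<lambda>z. \<Prod>k<Suc n. f k ((zs @ [z]) ! k)) = (\<lambda>z. (\<Prod>k<n. f k (zs ! k)) * f n z)"
    proof
      fix z
      have "(\<Prod>k<n. f k ((zs @ [z]) ! k)) = (\<Prod>k<n. f k (zs ! k))"
        using l by (intro prod.cong refl) (simp add: nth_append)
      then show "(\<Prod>k<Suc n. f k ((zs @ [z]) ! k)) = (\<Prod>k<n. f k (zs ! k)) * f n z"
        using l by (simp add: nth_append)
    qed
    then show "measure_pmf.expectation q (\<lambda>z. \<Prod>k<Suc n. f k ((zs @ [z]) ! k))
        = (\<Prod>k<n. f k (zs ! k)) * measure_pmf.expectation q (f n)" by simp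
  qed auto
  also have "\<dots> = (\<Prod>k<n. measure_pmf.expectation q (f k)) * measure_pmf.expectation q (f n)"
    using Suc by simp
  finally show ?case by simp
qed

lemma rbb_path_length: "p \<in> set_pmf (rbb_path L init T) \<Longrightarrow> length p = Suc T"
  by (induction T arbitrary: p) auto

lemma rbb_path_last: "map_pmf last (rbb_path L init T) = rbb_law L init T"
proof (induction T)
  case 0 then show ?case by (simp add: pmf.map_comp o_def)
next
  case (Suc T)
  have "map_pmf last (rbb_path L init (Suc T)) = bind_pmf (rbb_path L init T) (\<lambda>xs. rbb_step L (last xs))"
    by (simp add: map_bind_pmf pmf.map_comp o_def)
  also have "\<dots> = bind_pmf (map_pmf last (rbb_path L init T)) (rbb_step L)"
    by (simp add: bind_map_pmf)
  finally show ?case using Suc by simp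
qed

lemma nl_path_length: "p \<in> set_pmf (nl_path \<mu> T) \<Longrightarrow> length p = Suc T"
  by (induction T arbitrary: p) auto


definition proj :: "nat \<Rightarrow> config list \<Rightarrow> nat list list" where
  "proj n p = map (\<lambda>k. map (\<lambda>\<eta>. \<eta> k) p) [0..<n]"
definition bse :: "nat \<Rightarrow> nat" where "bse x = x - (if 0 < x then 1 else 0)"
definition zc :: "nat list list \<Rightarrow> nat \<Rightarrow> nat" where
  "zc z k = last (z ! k) - bse (last (butlast (z ! k)))"
definition zw :: "nat \<Rightarrow> nat list list \<Rightarrow> bool" where
  "zw n z = (length z = n \<and> (\<forall>k<n. z ! k \<noteq> []) \<and> (\<forall>k<n. bse (last (butlast (z ! k))) \<le> last (z ! k)))"

lemma map_upt_eq_iff: "map f [0..<n] = z \<longleftrightarrow> length z = n \<and> (\<forall>k<n. f k = z ! k)"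
  by (auto simp: list_eq_iff_nth_eq)

lemma proj_snoc_iff:
  "proj n (p @ [\<eta>']) = z \<longleftrightarrow>
     length z = n \<and> (\<forall>k<n. z ! k \<noteq> [] \<and> butlast (z ! k) = map (\<lambda>\<eta>. \<eta> k) p \<and> last (z ! k) = \<eta>' k)"
  unfolding proj_def map_upt_eq_iff by (auto simp: snoc_eq_iff_butlast)

lemma proj_eq_butlast_iff:
  assumes "length z = n"
  shows "proj n p = map butlast z \<longleftrightarrow> (\<forall>k<n. butlast (z ! k) = map (\<lambda>\<eta>. \<eta> k) p)"
  unfolding proj_def map_upt_eq_iff using assms by auto

lemma Q_step_pt:
  assumes L: "0 < L" "n \<le> L" and p: "p \<noteq> []"
  shows "measure_pmf.prob (rbb_step L (last p)) {\<eta>'. proj n (p @ [\<eta>']) = z}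
     = (if zw n z then indicator {p. proj n p = map butlast z} p * Mb L n (occ L (last p)) (zc z) else 0)"
proof (cases "length z = n \<and> (\<forall>k<n. z ! k \<noteq> [] \<and> butlast (z ! k) = map (\<lambda>\<eta>. \<eta> k) p)")
  case False
  then have "{\<eta>'. proj n (p @ [\<eta>']) = z} = {}" by (auto simp: proj_snoc_iff)
  moreover have "zw n z \<Longrightarrow> proj n p \<noteq> map butlast z"
    using False by (auto simp: zw_def proj_eq_butlast_iff)
  ultimately show ?thesis by auto
next
  case True
  define \<eta> where "\<eta> = last p"
  define \<zeta> where "\<zeta> = (\<lambda>j. if j < L then \<eta> j - (if 0 < \<eta> j then 1 else 0) else 0)"
  have lb: "last (butlast (z ! k)) = \<eta> k" if "k < n" for k
    using True that p unfolding \<eta>_def by (simp add: last_map)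
  have zk: "\<zeta> k = bse (last (butlast (z ! k)))" if "k < n" for k
    using that L lb unfolding \<zeta>_def bse_def by auto
  have set: "{\<eta>'. proj n (p @ [\<eta>']) = z} = {\<eta>'. \<forall>k<n. \<eta>' k = last (z ! k)}"
    using True by (auto simp: proj_snoc_iff)
  have ind: "proj n p = map butlast z" using True by (simp add: proj_eq_butlast_iff)
  have step: "rbb_step L \<eta> = add_balls L (occ L \<eta>) \<zeta>" unfolding rbb_step_def \<zeta>_def ..
  show ?thesis
  proof (cases "zw n z")
    case True
    then have "{\<eta>'. \<forall>k<n. \<eta>' k = last (z ! k)} = {\<eta>'. \<forall>k<n. \<eta>' k = \<zeta> k + zc z k}"
      unfolding zw_def zc_def using zk by auto
    then show ?thesis using True ind add_balls_marg[OF L, of "occ L \<eta>" \<zeta> "zc z"]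
      unfolding \<eta>_def[symmetric] set step by simp
  next
    case False
    then obtain k where k: "k < n" "last (z ! k) < bse (last (butlast (z ! k)))"
      using \<open>length z = n \<and> _\<close> unfolding zw_def by auto
    have "set_pmf (add_balls L (occ L \<eta>) \<zeta>) \<inter> {\<eta>'. \<forall>k<n. \<eta>' k = last (z ! k)} = {}"
      using add_balls_mono[OF L(1), of _ "occ L \<eta>" \<zeta> k] k zk[of k] by force
    then have "measure_pmf.prob (add_balls L (occ L \<eta>) \<zeta>) {\<eta>'. \<forall>k<n. \<eta>' k = last (z ! k)} = 0"
      by (simp add: measure_pmf_zero_iff)
    then show ?thesis using False unfolding \<eta>_def[symmetric] set step by simp
  qed
qed

lemma Q_step:
  assumes L: "0 < L" "n \<le> L"
  shows "pmf (map_pmf (proj n) (rbb_path L init (Suc T))) z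
    = (if zw n z then measure_pmf.expectation (rbb_path L init T)
          (\<lambda>p. indicator {p. proj n p = map butlast z} p * Mb L n (occ L (last p)) (zc z)) else 0)"
proof -
  have "map_pmf (proj n) (rbb_path L init (Suc T))
      = bind_pmf (rbb_path L init T) (\<lambda>p. map_pmf (\<lambda>\<eta>'. proj n (p @ [\<eta>'])) (rbb_step L (last p)))"
    by (simp add: map_bind_pmf pmf.map_comp o_def)
  then have "pmf (map_pmf (proj n) (rbb_path L init (Suc T))) z
      = measure_pmf.expectation (rbb_path L init T) (\<lambda>p. measure_pmf.prob (rbb_step L (last p)) {\<eta>'. proj n (p @ [\<eta>']) = z})"
    by (simp add: pmf_bind pmf_map vimage_def)
  also have "\<dots> = measure_pmf.expectation (rbb_path L init T)
      (\<lambda>p. if zw n z then indicator {p. proj n p = map butlast z} p * Mb L n (occ L (last p)) (zc z) else 0)"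
  proof (intro integral_cong_AE AE_pmfI)
    fix p assume "p \<in> set_pmf (rbb_path L init T)"
    then have "p \<noteq> []" using rbb_path_length by fastforce
    then show "measure_pmf.prob (rbb_step L (last p)) {\<eta>'. proj n (p @ [\<eta>']) = z} =
      (if zw n z then indicator {p. proj n p = map butlast z} p * Mb L n (occ L (last p)) (zc z) else 0)"
      by (rule Q_step_pt[OF L])
  qed auto
  finally show ?thesis by simp
qed


lemma pmf_poi: "0 \<le> r \<Longrightarrow> pmf (poi r) m = r ^ m / fact m * exp (- r)"
  by (cases "r = 0") (auto simp: poi_def indicator_def)

lemma prob_poi_shift:
  "measure_pmf.prob (poi r) {N. b + N = y} = (if b \<le> y then pmf (poi r) (y - b) else 0)"
proof (cases "b \<le> y")
  case True
  then have "{N. b + N = y} = {y - b}" by auto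
  then show ?thesis using True by (simp add: measure_pmf_single)
next
  case False
  then have "{N. b + N = y} = {}" by auto
  then show ?thesis using False by simp
qed

lemma pmf_nl_Suc:
  "pmf (nl_path \<mu> (Suc T)) w = (if w = [] then 0 else pmf (nl_path \<mu> T) (butlast w) *
     (if bse (last (butlast w)) \<le> last w then
        pmf (poi (measure_pmf.prob (nl_path \<mu> T) {ys. 0 < last ys})) (last w - bse (last (butlast w))) else 0))"
proof -
  have e: "nl_path \<mu> (Suc T) = bind_pmf (nl_path \<mu> T) (\<lambda>xs. map_pmf (\<lambda>N. xs @ [bse (last xs) + N])
       (poi (measure_pmf.prob (nl_path \<mu> T) {ys. 0 < last ys})))"
    by (simp only: nl_path.simps bse_def)
  show ?thesis by (simp only: e pmf_bind_snoc prob_poi_shift)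
qed

lemma gpo_prod:
  assumes "0 \<le> r"
  shows "(\<Prod>k<n. pmf (poi r) (c k)) = gpo n c r"
proof -
  have "(\<Prod>k<n. pmf (poi r) (c k)) = (\<Prod>k<n. r ^ c k / fact (c k) * exp (- r))"
    using assms by (simp add: pmf_poi)
  also have "\<dots> = (\<Prod>k<n. r ^ c k) / (\<Prod>k<n. fact (c k)) * exp (- r) ^ n"
    by (simp add: prod.distrib prod_dividef)
  also have "(\<Prod>k<n. r ^ c k) = r ^ (\<Sum>k<n. c k)" by (simp add: power_sum)
  also have "exp (- r) ^ n = exp (- (real n * r))" by (simp add: exp_of_nat_mult[symmetric])
  finally show ?thesis unfolding gpo_def by simp
qed

lemma R_step:
  "pmf (iid n (nl_path \<mu> (Suc T))) z = (if zw n z then pmf (iid n (nl_path \<mu> T)) (map butlast z) *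
      gpo n (zc z) (measure_pmf.prob (nl_path \<mu> T) {ys. 0 < last ys}) else 0)"
proof -
  define r where "r = measure_pmf.prob (nl_path \<mu> T) {ys. 0 < last ys}"
  have r0: "0 \<le> r" unfolding r_def by simp
  show ?thesis
  proof (cases "zw n z")
    case True
    then have l: "length z = n" and ne: "\<And>k. k < n \<Longrightarrow> z ! k \<noteq> []"
      and le: "\<And>k. k < n \<Longrightarrow> bse (last (butlast (z ! k))) \<le> last (z ! k)" unfolding zw_def by auto
    have "pmf (iid n (nl_path \<mu> (Suc T))) z = (\<Prod>k<n. pmf (nl_path \<mu> (Suc T)) (z ! k))"
      using l by (simp add: pmf_iid)
    also have "\<dots> = (\<Prod>k<n. pmf (nl_path \<mu> T) (butlast (z ! k)) * pmf (poi r) (zc z k))"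
      using ne le unfolding r_def zc_def by (intro prod.cong refl) (simp del: nl_path.simps add: pmf_nl_Suc)
    also have "\<dots> = (\<Prod>k<n. pmf (nl_path \<mu> T) (map butlast z ! k)) * (\<Prod>k<n. pmf (poi r) (zc z k))"
      using l by (simp add: prod.distrib)
    also have "(\<Prod>k<n. pmf (nl_path \<mu> T) (map butlast z ! k)) = pmf (iid n (nl_path \<mu> T)) (map butlast z)"
      using l by (simp add: pmf_iid)
    also have "(\<Prod>k<n. pmf (poi r) (zc z k)) = gpo n (zc z) r" by (rule gpo_prod[OF r0])
    finally show ?thesis using True unfolding r_def by simp
  next
    case False
    show ?thesis
    proof (cases "length z = n")
      case l: True
      then obtain k where k: "k < n" "z ! k = [] \<or> \<not> bse (last (butlast (z ! k))) \<le> last (z ! k)"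
        using False unfolding zw_def by auto
      have "pmf (nl_path \<mu> (Suc T)) (z ! k) = 0" using k by (auto simp del: nl_path.simps simp: pmf_nl_Suc)
      then have "(\<Prod>k<n. pmf (nl_path \<mu> (Suc T)) (z ! k)) = 0" using k by (intro prod_zero) auto
      then show ?thesis using l False by (simp add: pmf_iid)
    next
      case l: False
      then show ?thesis using False by (simp add: pmf_iid)
    qed
  qed
qed


lemma pmf_abs_int_le:
  fixes h k :: "'a \<Rightarrow> real"
  assumes "\<And>x. \<bar>h x\<bar> \<le> k x" "\<And>x. \<bar>k x\<bar> \<le> B"
  shows "\<bar>measure_pmf.expectation M h\<bar> \<le> measure_pmf.expectation M k"
proof -
  have ih: "integrable (measure_pmf M) h"
  proof (rule pmf_integrable_bdd[where B=B])
    fix x show "\<bar>h x\<bar> \<le> B" using assms(1)[of x] assms(2)[of x] abs_ge_self[of "k x"] by linarith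
  qed
  have ik: "integrable (measure_pmf M) k" by (rule pmf_integrable_bdd[where B=B]) (use assms in auto)
  have "\<bar>measure_pmf.expectation M h\<bar> \<le> measure_pmf.expectation M (\<lambda>x. \<bar>h x\<bar>)"
    by (rule integral_abs_bound)
  also have "\<dots> \<le> measure_pmf.expectation M k"
    by (rule integral_mono) (use ih ik assms in auto)
  finally show ?thesis .
qed

lemma conv_step:
  fixes P :: "nat \<Rightarrow> config list pmf" and A :: "config list set" and r a :: real
  assumes PA: "(\<lambda>L. measure_pmf.prob (P L) A) \<longlonglongrightarrow> a"
    and V: "(\<lambda>L. measure_pmf.expectation (P L) (\<lambda>p. \<bar>real (occ L (last p)) / real L - r\<bar>)) \<longlonglongrightarrow> 0"
    and r: "0 \<le> r" "r \<le> 1"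
  shows "(\<lambda>L. measure_pmf.expectation (P L) (\<lambda>p. indicator A p * Mb L n (occ L (last p)) c)) \<longlonglongrightarrow> a * gpo n c r"
proof -
  define s where "s = (\<Sum>k<n. c k)"
  define g where "g = gpo n c r"
  define \<delta> where "\<delta> L = real (s * s) / real L + (1 / (1 - real n / real L) ^ s - 1) + real (n * n) / real L" for L :: nat
  define V' where "V' L = measure_pmf.expectation (P L) (\<lambda>p. \<bar>real (occ L (last p)) / real L - r\<bar>)" for L
  define f where "f L = measure_pmf.expectation (P L) (\<lambda>p. indicator A p * Mb L n (occ L (last p)) c) - a * g" for L
  have b_lim: "(\<lambda>L. \<delta> L + real (s + n) * V' L + \<bar>measure_pmf.prob (P L) A - a\<bar> * \<bar>g\<bar>) \<longlonglongrightarrow> 0 + real (s + n) * 0 + \<bar>a - a\<bar> * \<bar>g\<bar>"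
    unfolding \<delta>_def V'_def by (intro tendsto_intros Mb_delta_lim V PA)
  have ev: "eventually (\<lambda>L. norm (f L) \<le> \<delta> L + real (s + n) * V' L + \<bar>measure_pmf.prob (P L) A - a\<bar> * \<bar>g\<bar>) sequentially"
    unfolding eventually_sequentially
  proof (intro exI allI impI)
    fix L assume L: "Suc (n + s) \<le> L"
    define x where "x p = real (occ L (last p)) / real L" for p
    define D1 where "D1 p = indicator A p * (Mb L n (occ L (last p)) c - gpo n c (x p))" for p
    define D2 where "D2 p = indicator A p * (gpo n c (x p) - g)" for p
    have x01: "0 \<le> x p" "x p \<le> 1" for p
      unfolding x_def using occ_le[of L "last p"] L by (auto simp: divide_le_eq_1)
    have d1: "\<bar>D1 p\<bar> \<le> \<delta> L" for p
    proof -
      have "\<bar>D1 p\<bar> \<le> \<bar>Mb L n (occ L (last p)) c - gpo n c (x p)\<bar>"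
        unfolding D1_def by (auto simp: indicator_def abs_mult)
      also have "\<dots> \<le> \<delta> L" unfolding x_def \<delta>_def s_def
        by (rule Mb_approx) (use L occ_le[of L "last p"] s_def in auto)
      finally show ?thesis .
    qed
    have d2: "\<bar>D2 p\<bar> \<le> real (s + n) * \<bar>x p - r\<bar>" for p
    proof -
      have "\<bar>D2 p\<bar> \<le> \<bar>gpo n c (x p) - g\<bar>" unfolding D2_def by (auto simp: indicator_def abs_mult)
      also have "\<dots> \<le> real (s + n) * \<bar>x p - r\<bar>" unfolding g_def s_def
        by (rule gpo_lip) (use x01 r in auto)
      finally show ?thesis .
    qed
    have d2b: "\<bar>real (s + n) * \<bar>x p - r\<bar>\<bar> \<le> real (s + n) * 2" for p
    proof -
      have "\<bar>x p - r\<bar> \<le> 2" using x01[of p] r by linarith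
      then have "real (s + n) * \<bar>x p - r\<bar> \<le> real (s + n) * 2" by (intro mult_left_mono) auto
      then show ?thesis by (simp add: abs_mult)
    qed
    have i1: "integrable (measure_pmf (P L)) D1" by (rule pmf_integrable_bdd[OF d1])
    have i2: "integrable (measure_pmf (P L)) D2"
    proof (rule pmf_integrable_bdd[where B="real (s + n) * 2"])
      fix p show "\<bar>D2 p\<bar> \<le> real (s + n) * 2" using d2[of p] d2b[of p] abs_ge_self[of "real (s + n) * \<bar>x p - r\<bar>"] by linarith
    qed
    have i3: "integrable (measure_pmf (P L)) (\<lambda>p. g * indicator A p)"
      by (rule pmf_integrable_bdd[where B="\<bar>g\<bar>"]) (auto simp: indicator_def)
    have eq: "(\<lambda>p. indicator A p * Mb L n (occ L (last p)) c) = (\<lambda>p. D1 p + D2 p + g * indicator A p)"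
      unfolding D1_def D2_def by (auto simp: algebra_simps)
    have "measure_pmf.expectation (P L) (\<lambda>p. indicator A p * Mb L n (occ L (last p)) c)
       = measure_pmf.expectation (P L) D1 + measure_pmf.expectation (P L) D2 + g * measure_pmf.prob (P L) A"
      unfolding eq
      by (subst Bochner_Integration.integral_add, intro Bochner_Integration.integrable_add i1 i2, rule i3,
          subst Bochner_Integration.integral_add, rule i1, rule i2) simp
    then have fe: "f L = measure_pmf.expectation (P L) D1 + measure_pmf.expectation (P L) D2
        + (measure_pmf.prob (P L) A - a) * g" unfolding f_def by (simp add: algebra_simps)
    have e1: "\<bar>measure_pmf.expectation (P L) D1\<bar> \<le> \<delta> L"
    proof -
      have "\<bar>measure_pmf.expectation (P L) D1\<bar> \<le> measure_pmf.expectation (P L) (\<lambda>_. \<delta> L)"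
        by (rule pmf_abs_int_le[where B="\<bar>\<delta> L\<bar>"]) (use d1 in auto)
      then show ?thesis by simp
    qed
    have e2: "\<bar>measure_pmf.expectation (P L) D2\<bar> \<le> real (s + n) * V' L"
    proof -
      have "\<bar>measure_pmf.expectation (P L) D2\<bar> \<le> measure_pmf.expectation (P L) (\<lambda>p. real (s + n) * \<bar>x p - r\<bar>)"
        by (rule pmf_abs_int_le[where B="real (s + n) * 2"]) (use d2 d2b in auto)
      also have "\<dots> = real (s + n) * V' L" unfolding V'_def x_def by simp
      finally show ?thesis .
    qed
    have e3: "\<bar>(measure_pmf.prob (P L) A - a) * g\<bar> = \<bar>measure_pmf.prob (P L) A - a\<bar> * \<bar>g\<bar>"
      by (simp add: abs_mult)
    show "norm (f L) \<le> \<delta> L + real (s + n) * V' L + \<bar>measure_pmf.prob (P L) A - a\<bar> * \<bar>g\<bar>"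
      unfolding fe real_norm_def using e1 e2 e3 by linarith
  qed
  have "f \<longlonglongrightarrow> 0" by (rule Lim_null_comparison[OF ev]) (use b_lim in simp)
  then have "(\<lambda>L. f L + a * g) \<longlonglongrightarrow> 0 + a * g" by (intro tendsto_intros)
  then show ?thesis unfolding f_def g_def by simp
qed


lemma proj_nth: "k < n \<Longrightarrow> proj n p ! k = map (\<lambda>\<eta>. \<eta> k) p"
  unfolding proj_def by simp

lemma length_proj: "length (proj n p) = n" unfolding proj_def by simp

lemma base_pointwise:
  fixes init :: "nat \<Rightarrow> config pmf" and \<mu> :: "nat pmf"
  assumes conv: "\<And>n (\<xi> :: nat \<Rightarrow> nat).
       (\<lambda>L. measure_pmf.prob (init L) {\<eta>. \<forall>k<n. \<eta> k = \<xi> k}) \<longlonglongrightarrow> (\<Prod>k<n. pmf \<mu> (\<xi> k))"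
  shows "(\<lambda>L. pmf (map_pmf (proj n) (rbb_path L (init L) 0)) z) \<longlonglongrightarrow> pmf (iid n (nl_path \<mu> 0)) z"
proof -
  have Q: "pmf (map_pmf (proj n) (rbb_path L (init L) 0)) z = measure_pmf.prob (init L) {\<eta>. proj n [\<eta>] = z}" for L
    by (simp add: pmf_map pmf.map_comp o_def vimage_def)
  show ?thesis
  proof (cases "length z = n \<and> (\<forall>k<n. z ! k = [hd (z ! k)])")
    case True
    have "{\<eta>. proj n [\<eta>] = z} = {\<eta>. \<forall>k<n. \<eta> k = hd (z ! k)}"
    proof (intro set_eqI iffI; simp)
      fix \<eta> assume "proj n [\<eta>] = z"
      then have "\<forall>k<n. [\<eta> k] = z ! k" unfolding proj_def map_upt_eq_iff by simp
      then show "\<forall>k<n. \<eta> k = hd (z ! k)" by (metis list.sel(1))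
    next
      fix \<eta> assume a: "\<forall>k<n. \<eta> k = hd (z ! k)"
      have "\<forall>k<n. [\<eta> k] = z ! k" using a True by metis
      then show "proj n [\<eta>] = z" unfolding proj_def map_upt_eq_iff using True by simp
    qed
    moreover have "pmf (iid n (nl_path \<mu> 0)) z = (\<Prod>k<n. pmf \<mu> (hd (z ! k)))"
    proof -
      have "pmf (map_pmf (\<lambda>x. [x]) \<mu>) (z ! k) = pmf \<mu> (hd (z ! k))" if "k < n" for k
        using True that pmf_map_inj'[of "\<lambda>x. [x]" \<mu> "hd (z ! k)"] by (metis inj_def list.inject)
      then show ?thesis using True by (simp add: pmf_iid)
    qed
    ultimately show ?thesis unfolding Q using conv[of n "\<lambda>k. hd (z ! k)"] by simp
  next
    case False
    have "{\<eta>. proj n [\<eta>] = z} = {}"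
    proof (rule ccontr)
      assume "{\<eta>. proj n [\<eta>] = z} \<noteq> {}"
      then obtain \<eta> where "proj n [\<eta>] = z" by blast
      then have "length z = n" "\<forall>k<n. [\<eta> k] = z ! k" unfolding proj_def map_upt_eq_iff by simp_all
      then have "length z = n \<and> (\<forall>k<n. z ! k = [hd (z ! k)])" by (metis list.sel(1))
      then show False using False by blast
    qed
    moreover have "pmf (iid n (nl_path \<mu> 0)) z = 0"
    proof (cases "length z = n")
      case True
      then obtain k where k: "k < n" "z ! k \<noteq> [hd (z ! k)]" using False by auto
      have "pmf (map_pmf (\<lambda>x. [x]) \<mu>) (z ! k) = 0"
        by (rule pmf_map_outside) (use k in auto)
      then have "(\<Prod>k<n. pmf (nl_path \<mu> 0) (z ! k)) = 0" using k by (intro prod_zero) auto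
      then show ?thesis using True by (simp add: pmf_iid)
    qed (simp add: pmf_iid)
    ultimately show ?thesis unfolding Q by simp
  qed
qed


lemma V_lemma:
  fixes M :: "nat \<Rightarrow> config pmf" and r :: real
  assumes inv: "\<And>L \<pi>. \<pi> permutes {..<L} \<Longrightarrow> map_pmf (\<lambda>\<eta>. \<eta> \<circ> \<pi>) (M L) = M L"
    and p1: "(\<lambda>L. measure_pmf.prob (M L) {\<eta>. 0 < \<eta> 0}) \<longlonglongrightarrow> r"
    and p2: "(\<lambda>L. measure_pmf.prob (M L) {\<eta>. 0 < \<eta> 0 \<and> 0 < \<eta> 1}) \<longlonglongrightarrow> r ^ 2"
  shows "(\<lambda>L. measure_pmf.expectation (M L) (\<lambda>\<eta>. \<bar>real (occ L \<eta>) / real L - r\<bar>)) \<longlonglongrightarrow> 0"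
proof -
  define P1 where "P1 L = measure_pmf.prob (M L) {\<eta>. 0 < \<eta> 0}" for L
  define P2 where "P2 L = measure_pmf.prob (M L) {\<eta>. 0 < \<eta> 0 \<and> 0 < \<eta> 1}" for L
  define m2 where "m2 L = measure_pmf.expectation (M L) (\<lambda>\<eta>. (real (occ L \<eta>) / real L - r) ^ 2)" for L
  have F: "(\<lambda>L::nat. P1 L * (1 / real L) + P2 L * (1 - 1 / real L) - 2 * r * P1 L + r ^ 2)
      \<longlonglongrightarrow> r * 0 + r ^ 2 * (1 - 0) - 2 * r * r + r ^ 2"
    unfolding P1_def P2_def by (intro tendsto_intros p1 p2 lim_1_over_n)
  have ev: "eventually (\<lambda>L. P1 L * (1 / real L) + P2 L * (1 - 1 / real L) - 2 * r * P1 L + r ^ 2 = m2 L) sequentially"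
    unfolding eventually_sequentially
  proof (intro exI allI impI)
    fix L :: nat assume "2 \<le> L"
    then have "1 < L" by simp
    have mm: "m2 L = (P1 L + (real L - 1) * P2 L) / real L - 2 * r * P1 L + r ^ 2"
      unfolding m2_def P1_def P2_def by (rule occ_moments[OF inv \<open>1 < L\<close>])
    show "P1 L * (1 / real L) + P2 L * (1 - 1 / real L) - 2 * r * P1 L + r ^ 2 = m2 L"
      unfolding mm using \<open>1 < L\<close> by (simp add: field_simps)
  qed
  have z0: "r * 0 + r ^ 2 * (1 - 0) - 2 * r * r + r ^ 2 = (0::real)" by (simp add: power2_eq_square)
  have F0: "(\<lambda>L::nat. P1 L * (1 / real L) + P2 L * (1 - 1 / real L) - 2 * r * P1 L + r ^ 2) \<longlonglongrightarrow> 0"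
    using F unfolding z0 .
  have m2: "m2 \<longlonglongrightarrow> 0" by (rule Lim_transform_eventually[OF F0 ev])
  show ?thesis
  proof (rule tendstoI)
    fix e :: real assume e: "0 < e"
    define \<epsilon> where "\<epsilon> = e / 3"
    have \<epsilon>: "0 < \<epsilon>" unfolding \<epsilon>_def using e by simp
    have "eventually (\<lambda>L. dist (m2 L) 0 < \<epsilon> * \<epsilon>) sequentially"
      using m2 \<epsilon> by (intro tendstoD) auto
    then show "eventually (\<lambda>L. dist (measure_pmf.expectation (M L) (\<lambda>\<eta>. \<bar>real (occ L \<eta>) / real L - r\<bar>)) 0 < e) sequentially"
    proof (rule eventually_mono)
      fix L assume L: "dist (m2 L) 0 < \<epsilon> * \<epsilon>"
      define X where "X \<eta> = real (occ L \<eta>) / real L - r" for \<eta>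
      have Xb: "\<bar>X \<eta>\<bar> \<le> 1 + \<bar>r\<bar>" for \<eta>
      proof -
        have "0 \<le> real (occ L \<eta>) / real L" by simp
        moreover have "real (occ L \<eta>) / real L \<le> 1" using occ_le[of L \<eta>] by (cases "L = 0") (auto simp: divide_le_eq_1)
        ultimately show ?thesis unfolding X_def by linarith
      qed
      have pt: "\<bar>X \<eta>\<bar> \<le> \<epsilon> + X \<eta> ^ 2 / \<epsilon>" for \<eta>
      proof (cases "\<bar>X \<eta>\<bar> \<le> \<epsilon>")
        case True then show ?thesis using \<epsilon> by (simp add: add_increasing2)
      next
        case False
        then have "\<bar>X \<eta>\<bar> * \<epsilon> \<le> \<bar>X \<eta>\<bar> * \<bar>X \<eta>\<bar>" using \<epsilon> by (intro mult_left_mono) auto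
        then have "\<bar>X \<eta>\<bar> \<le> X \<eta> ^ 2 / \<epsilon>" using \<epsilon> by (simp add: field_simps power2_eq_square)
        then show ?thesis using \<epsilon> by simp
      qed
      have i1: "integrable (measure_pmf (M L)) (\<lambda>\<eta>. \<bar>X \<eta>\<bar>)" by (rule pmf_integrable_bdd[where B="1 + \<bar>r\<bar>"]) (use Xb in auto)
      have b2: "\<bar>X \<eta> ^ 2\<bar> \<le> (1 + \<bar>r\<bar>) ^ 2" for \<eta>
      proof -
        have "\<bar>X \<eta>\<bar> \<le> \<bar>1 + \<bar>r\<bar>\<bar>" using Xb[of \<eta>] by simp
        then have "X \<eta> ^ 2 \<le> (1 + \<bar>r\<bar>) ^ 2" by (simp only: abs_le_square_iff)
        then show ?thesis by simp
      qed
      have i2: "integrable (measure_pmf (M L)) (\<lambda>\<eta>. \<epsilon> + X \<eta> ^ 2 / \<epsilon>)"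
        by (intro Bochner_Integration.integrable_add integrable_divide pmf_integrable_bdd[OF b2]) auto
      have "measure_pmf.expectation (M L) (\<lambda>\<eta>. \<bar>X \<eta>\<bar>) \<le> measure_pmf.expectation (M L) (\<lambda>\<eta>. \<epsilon> + X \<eta> ^ 2 / \<epsilon>)"
        by (rule integral_mono[OF i1 i2 pt])
      also have "\<dots> = \<epsilon> + m2 L / \<epsilon>"
      proof -
        have iX2: "integrable (measure_pmf (M L)) (\<lambda>\<eta>. X \<eta> ^ 2)" by (rule pmf_integrable_bdd[OF b2])
        have iX3: "integrable (measure_pmf (M L)) (\<lambda>\<eta>. X \<eta> ^ 2 / \<epsilon>)" using iX2 by simp
        have "measure_pmf.expectation (M L) (\<lambda>\<eta>. \<epsilon> + X \<eta> ^ 2 / \<epsilon>)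
           = measure_pmf.expectation (M L) (\<lambda>\<eta>. \<epsilon>) + measure_pmf.expectation (M L) (\<lambda>\<eta>. X \<eta> ^ 2 / \<epsilon>)"
          by (rule Bochner_Integration.integral_add[OF _ iX3]) simp
        also have "\<dots> = \<epsilon> + measure_pmf.expectation (M L) (\<lambda>\<eta>. X \<eta> ^ 2) / \<epsilon>" by simp
        finally show ?thesis unfolding m2_def X_def .
      qed
      also have "\<dots> < \<epsilon> + \<epsilon>"
      proof -
        have "m2 L < \<epsilon> * \<epsilon>" using L by (simp add: dist_real_def)
        then have "m2 L / \<epsilon> < \<epsilon>" using \<epsilon> by (simp add: divide_less_eq)
        then show ?thesis by simp
      qed
      finally have "measure_pmf.expectation (M L) (\<lambda>\<eta>. \<bar>X \<eta>\<bar>) < e" using e unfolding \<epsilon>_def by linarith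
      moreover have "0 \<le> measure_pmf.expectation (M L) (\<lambda>\<eta>. \<bar>X \<eta>\<bar>)" by simp
      ultimately show "dist (measure_pmf.expectation (M L) (\<lambda>\<eta>. \<bar>real (occ L \<eta>) / real L - r\<bar>)) 0 < e"
        unfolding X_def by (simp add: dist_real_def)
    qed
  qed
qed


lemma exp_conv:
  fixes init :: "nat \<Rightarrow> config pmf" and \<mu> :: "nat pmf" and g :: "nat \<Rightarrow> nat list \<Rightarrow> real"
  assumes pw: "\<And>z. (\<lambda>L. pmf (map_pmf (proj n) (rbb_path L (init L) T)) z) \<longlonglongrightarrow> pmf (iid n (nl_path \<mu> T)) z"
    and bd: "\<And>k w. k < n \<Longrightarrow> \<bar>g k w\<bar> \<le> B k"
  shows "(\<lambda>L. measure_pmf.expectation (rbb_path L (init L) T) (\<lambda>p. \<Prod>k<n. g k (map (\<lambda>\<eta>. \<eta> k) p)))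
     \<longlonglongrightarrow> (\<Prod>k<n. measure_pmf.expectation (nl_path \<mu> T) (g k))"
proof -
  have fb: "\<bar>\<Prod>k<n. g k (z ! k)\<bar> \<le> (\<Prod>k<n. B k)" for z
    by (rule prod_abs_bound[where z="\<lambda>k. z ! k"]) (use bd in auto)
  have "(\<lambda>L. measure_pmf.expectation (map_pmf (proj n) (rbb_path L (init L) T)) (\<lambda>z. \<Prod>k<n. g k (z ! k)))
     \<longlonglongrightarrow> measure_pmf.expectation (iid n (nl_path \<mu> T)) (\<lambda>z. \<Prod>k<n. g k (z ! k))"
    by (rule scheffe[OF pw fb])
  moreover have "measure_pmf.expectation (map_pmf (proj n) (rbb_path L (init L) T)) (\<lambda>z. \<Prod>k<n. g k (z ! k))
     = measure_pmf.expectation (rbb_path L (init L) T) (\<lambda>p. \<Prod>k<n. g k (map (\<lambda>\<eta>. \<eta> k) p))" for L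
    by (simp add: proj_nth)
  moreover have "measure_pmf.expectation (iid n (nl_path \<mu> T)) (\<lambda>z. \<Prod>k<n. g k (z ! k))
     = (\<Prod>k<n. measure_pmf.expectation (nl_path \<mu> T) (g k))"
    by (rule iid_prod[OF bd])
  ultimately show ?thesis by simp
qed

lemma exp_last:
  fixes h :: "config \<Rightarrow> real"
  shows "measure_pmf.expectation (rbb_path L init T) (\<lambda>p. h (last p)) = measure_pmf.expectation (rbb_law L init T) h"
proof -
  have "measure_pmf.expectation (rbb_law L init T) h = measure_pmf.expectation (map_pmf last (rbb_path L init T)) h"
    by (simp add: rbb_path_last)
  then show ?thesis by simp
qed

lemma p12_conv:
  fixes init :: "nat \<Rightarrow> config pmf" and \<mu> :: "nat pmf"
  assumes pw: "\<And>n z. (\<lambda>L. pmf (map_pmf (proj n) (rbb_path L (init L) T)) z) \<longlonglongrightarrow> pmf (iid n (nl_path \<mu> T)) z"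
  shows "(\<lambda>L. measure_pmf.prob (rbb_law L (init L) T) {\<eta>. 0 < \<eta> 0}) \<longlonglongrightarrow> measure_pmf.prob (nl_path \<mu> T) {ys. 0 < last ys}"
    and "(\<lambda>L. measure_pmf.prob (rbb_law L (init L) T) {\<eta>. 0 < \<eta> 0 \<and> 0 < \<eta> 1}) \<longlonglongrightarrow> measure_pmf.prob (nl_path \<mu> T) {ys. 0 < last ys} ^ 2"
proof -
  define g where "g k w = (indicator {w :: nat list. 0 < last w} w :: real)" for k :: nat and w
  have gb: "\<bar>g k w\<bar> \<le> 1" for k w unfolding g_def by (auto simp: indicator_def)
  have lim1: "(\<lambda>L. measure_pmf.expectation (rbb_path L (init L) T) (\<lambda>p. \<Prod>k<Suc 0. g k (map (\<lambda>\<eta>. \<eta> k) p)))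
     \<longlonglongrightarrow> (\<Prod>k<Suc 0. measure_pmf.expectation (nl_path \<mu> T) (g k))"
    by (rule exp_conv[OF pw gb])
  have lim2: "(\<lambda>L. measure_pmf.expectation (rbb_path L (init L) T) (\<lambda>p. \<Prod>k<Suc (Suc 0). g k (map (\<lambda>\<eta>. \<eta> k) p)))
     \<longlonglongrightarrow> (\<Prod>k<Suc (Suc 0). measure_pmf.expectation (nl_path \<mu> T) (g k))"
    by (rule exp_conv[OF pw gb])
  have nlg: "measure_pmf.expectation (nl_path \<mu> T) (g k) = measure_pmf.prob (nl_path \<mu> T) {ys. 0 < last ys}" for k
    unfolding g_def by simp
  have e1: "measure_pmf.expectation (rbb_path L (init L) T) (\<lambda>p. \<Prod>k<Suc 0. g k (map (\<lambda>\<eta>. \<eta> k) p))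
      = measure_pmf.prob (rbb_law L (init L) T) {\<eta>. 0 < \<eta> 0}" for L
  proof -
    have "measure_pmf.expectation (rbb_path L (init L) T) (\<lambda>p. \<Prod>k<Suc 0. g k (map (\<lambda>\<eta>. \<eta> k) p))
       = measure_pmf.expectation (rbb_path L (init L) T) (\<lambda>p. indicator {\<eta>. 0 < \<eta> 0} (last p))"
    proof (intro integral_cong_AE AE_pmfI)
      fix p assume "p \<in> set_pmf (rbb_path L (init L) T)"
      then have "p \<noteq> []" using rbb_path_length by fastforce
      then show "(\<Prod>k<Suc 0. g k (map (\<lambda>\<eta>. \<eta> k) p)) = indicator {\<eta>. 0 < \<eta> 0} (last p)"
        unfolding g_def by (simp add: last_map indicator_def)
    qed auto
    also have "\<dots> = measure_pmf.prob (rbb_law L (init L) T) {\<eta>. 0 < \<eta> 0}"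
      unfolding exp_last by simp
    finally show ?thesis .
  qed
  have e2: "measure_pmf.expectation (rbb_path L (init L) T) (\<lambda>p. \<Prod>k<Suc (Suc 0). g k (map (\<lambda>\<eta>. \<eta> k) p))
      = measure_pmf.prob (rbb_law L (init L) T) {\<eta>. 0 < \<eta> 0 \<and> 0 < \<eta> 1}" for L
  proof -
    have "measure_pmf.expectation (rbb_path L (init L) T) (\<lambda>p. \<Prod>k<Suc (Suc 0). g k (map (\<lambda>\<eta>. \<eta> k) p))
       = measure_pmf.expectation (rbb_path L (init L) T) (\<lambda>p. indicator {\<eta>. 0 < \<eta> 0 \<and> 0 < \<eta> 1} (last p))"
    proof (intro integral_cong_AE AE_pmfI)
      fix p assume "p \<in> set_pmf (rbb_path L (init L) T)"
      then have "p \<noteq> []" using rbb_path_length by fastforce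
      then show "(\<Prod>k<Suc (Suc 0). g k (map (\<lambda>\<eta>. \<eta> k) p)) = indicator {\<eta>. 0 < \<eta> 0 \<and> 0 < \<eta> 1} (last p)"
        unfolding g_def by (simp add: last_map indicator_def)
    qed auto
    also have "\<dots> = measure_pmf.prob (rbb_law L (init L) T) {\<eta>. 0 < \<eta> 0 \<and> 0 < \<eta> 1}"
      unfolding exp_last by simp
    finally show ?thesis .
  qed
  show "(\<lambda>L. measure_pmf.prob (rbb_law L (init L) T) {\<eta>. 0 < \<eta> 0}) \<longlonglongrightarrow> measure_pmf.prob (nl_path \<mu> T) {ys. 0 < last ys}"
    using lim1 unfolding e1 nlg by simp
  show "(\<lambda>L. measure_pmf.prob (rbb_law L (init L) T) {\<eta>. 0 < \<eta> 0 \<and> 0 < \<eta> 1}) \<longlonglongrightarrow> measure_pmf.prob (nl_path \<mu> T) {ys. 0 < last ys} ^ 2"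
    using lim2 unfolding e2 nlg by (simp add: power2_eq_square)
qed

lemma step_pointwise:
  fixes init :: "nat \<Rightarrow> config pmf" and \<mu> :: "nat pmf"
  assumes exl: "\<And>L \<pi>. \<pi> permutes {..<L} \<Longrightarrow> map_pmf (\<lambda>\<eta>. \<eta> \<circ> \<pi>) (rbb_law L (init L) T) = rbb_law L (init L) T"
    and pw: "\<And>n z. (\<lambda>L. pmf (map_pmf (proj n) (rbb_path L (init L) T)) z) \<longlonglongrightarrow> pmf (iid n (nl_path \<mu> T)) z"
  shows "(\<lambda>L. pmf (map_pmf (proj n) (rbb_path L (init L) (Suc T))) z) \<longlonglongrightarrow> pmf (iid n (nl_path \<mu> (Suc T))) z"
proof -
  define r where "r = measure_pmf.prob (nl_path \<mu> T) {ys. 0 < last ys}"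
  have r01: "0 \<le> r" "r \<le> 1" unfolding r_def by auto
  have V: "(\<lambda>L. measure_pmf.expectation (rbb_law L (init L) T) (\<lambda>\<eta>. \<bar>real (occ L \<eta>) / real L - r\<bar>)) \<longlonglongrightarrow> 0"
    unfolding r_def by (rule V_lemma[OF exl p12_conv[OF pw]])
  have V': "(\<lambda>L. measure_pmf.expectation (rbb_path L (init L) T) (\<lambda>p. \<bar>real (occ L (last p)) / real L - r\<bar>)) \<longlonglongrightarrow> 0"
    using V unfolding exp_last[of _ _ _ "\<lambda>\<eta>. \<bar>real (occ _ \<eta>) / real _ - r\<bar>"] by simp
  have ev: "eventually (\<lambda>L. 0 < L \<and> n \<le> L) sequentially"
    unfolding eventually_sequentially by (intro exI[of _ "Suc n"]) auto
  show ?thesis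
  proof (cases "zw n z")
    case True
    define A where "A = {p. proj n p = map butlast z}"
    define a where "a = pmf (iid n (nl_path \<mu> T)) (map butlast z)"
    have PA: "(\<lambda>L. measure_pmf.prob (rbb_path L (init L) T) A) \<longlonglongrightarrow> a"
    proof -
      have "measure_pmf.prob (rbb_path L (init L) T) A = pmf (map_pmf (proj n) (rbb_path L (init L) T)) (map butlast z)" for L
        unfolding A_def by (simp add: pmf_map vimage_def)
      then show ?thesis unfolding a_def using pw by simp
    qed
    have lim: "(\<lambda>L. measure_pmf.expectation (rbb_path L (init L) T) (\<lambda>p. indicator A p * Mb L n (occ L (last p)) (zc z)))
        \<longlonglongrightarrow> a * gpo n (zc z) r"
      by (rule conv_step[OF PA V' r01])
    have e: "eventually (\<lambda>L. measure_pmf.expectation (rbb_path L (init L) T) (\<lambda>p. indicator A p * Mb L n (occ L (last p)) (zc z))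
        = pmf (map_pmf (proj n) (rbb_path L (init L) (Suc T))) z) sequentially"
    proof (rule eventually_mono[OF ev])
      fix L assume "0 < L \<and> n \<le> L"
      then show "measure_pmf.expectation (rbb_path L (init L) T) (\<lambda>p. indicator A p * Mb L n (occ L (last p)) (zc z))
        = pmf (map_pmf (proj n) (rbb_path L (init L) (Suc T))) z"
        using Q_step[of L n "init L" T z] True unfolding A_def by simp
    qed
    have "(\<lambda>L. pmf (map_pmf (proj n) (rbb_path L (init L) (Suc T))) z) \<longlonglongrightarrow> a * gpo n (zc z) r"
      by (rule Lim_transform_eventually[OF lim e])
    then show ?thesis using True unfolding R_step a_def r_def by simp
  next
    case False
    have e: "eventually (\<lambda>L. 0 = pmf (map_pmf (proj n) (rbb_path L (init L) (Suc T))) z) sequentially"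
    proof (rule eventually_mono[OF ev])
      fix L assume "0 < L \<and> n \<le> L"
      then show "0 = pmf (map_pmf (proj n) (rbb_path L (init L) (Suc T))) z"
        using Q_step[of L n "init L" T z] False by simp
    qed
    have "(\<lambda>L. pmf (map_pmf (proj n) (rbb_path L (init L) (Suc T))) z) \<longlonglongrightarrow> 0"
      by (rule Lim_transform_eventually[OF tendsto_const e])
    then show ?thesis using False unfolding R_step by simp
  qed
qed


theorem theorem3p1:
  fixes init :: "nat \<Rightarrow> config pmf" and \<mu> :: "nat pmf"
  assumes support: "\<And>L. set_pmf (init L) \<subseteq> {\<eta>. \<forall>j\<ge>L. \<eta> j = 0}"
    and exch: "\<And>L \<pi>. \<pi> permutes {..<L} \<Longrightarrow> map_pmf (\<lambda>\<eta>. \<eta> \<circ> \<pi>) (init L) = init L"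
    and conv: "\<And>n (\<xi> :: nat \<Rightarrow> nat).
       (\<lambda>L. measure_pmf.prob (init L) {\<eta>. \<forall>k<n. \<eta> k = \<xi> k})
         \<longlonglongrightarrow> (\<Prod>k<n. pmf \<mu> (\<xi> k))"
  shows "(\<forall>L t \<pi>. \<pi> permutes {..<L} \<longrightarrow>
            map_pmf (\<lambda>\<eta>. \<eta> \<circ> \<pi>) (rbb_law L (init L) t) = rbb_law L (init L) t)
       \<and> (\<forall>T n (\<Phi> :: nat \<Rightarrow> nat list \<Rightarrow> real).
            (\<forall>k<n. \<exists>B. \<forall>xs. length xs = Suc T \<longrightarrow> \<bar>\<Phi> k xs\<bar> \<le> B) \<longrightarrow>
            (\<lambda>L. measure_pmf.expectation (rbb_path L (init L) T)
                    (\<lambda>p. \<Prod>k<n. \<Phi> k (map (\<lambda>\<eta>. \<eta> k) p)))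
              \<longlonglongrightarrow> (\<Prod>k<n. measure_pmf.expectation (nl_path \<mu> T) (\<Phi> k)))"
proof -
  have exl: "\<And>L t \<pi>. \<pi> permutes {..<L} \<Longrightarrow> map_pmf (\<lambda>\<eta>. \<eta> \<circ> \<pi>) (rbb_law L (init L) t) = rbb_law L (init L) t"
    by (rule rbb_law_perm) (auto intro: exch)
  have pw: "(\<lambda>L. pmf (map_pmf (proj n) (rbb_path L (init L) T)) z) \<longlonglongrightarrow> pmf (iid n (nl_path \<mu> T)) z" for T n z
  proof (induction T arbitrary: n z)
    case 0
    show ?case by (rule base_pointwise[OF conv])
  next
    case (Suc T)
    show ?case by (rule step_pointwise[OF exl Suc.IH])
  qed
  have part2: "(\<lambda>L. measure_pmf.expectation (rbb_path L (init L) T) (\<lambda>p. \<Prod>k<n. \<Phi> k (map (\<lambda>\<eta>. \<eta> k) p)))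
              \<longlonglongrightarrow> (\<Prod>k<n. measure_pmf.expectation (nl_path \<mu> T) (\<Phi> k))"
    if bd: "\<forall>k<n. \<exists>B. \<forall>xs. length xs = Suc T \<longrightarrow> \<bar>\<Phi> k xs\<bar> \<le> B" for T n and \<Phi> :: "nat \<Rightarrow> nat list \<Rightarrow> real"
  proof -
    from bd have "\<forall>k. \<exists>B. k < n \<longrightarrow> (\<forall>xs. length xs = Suc T \<longrightarrow> \<bar>\<Phi> k xs\<bar> \<le> B)" by auto
    then obtain B where B: "\<And>k xs. k < n \<Longrightarrow> length xs = Suc T \<Longrightarrow> \<bar>\<Phi> k xs\<bar> \<le> B k" by metis
    define \<Phi>' where "\<Phi>' k xs = (if length xs = Suc T then \<Phi> k xs else 0)" for k xs
    have bd': "\<bar>\<Phi>' k w\<bar> \<le> \<bar>B k\<bar>" if "k < n" for k w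
      unfolding \<Phi>'_def using B[OF that, of w] by auto
    have lim: "(\<lambda>L. measure_pmf.expectation (rbb_path L (init L) T) (\<lambda>p. \<Prod>k<n. \<Phi>' k (map (\<lambda>\<eta>. \<eta> k) p)))
        \<longlonglongrightarrow> (\<Prod>k<n. measure_pmf.expectation (nl_path \<mu> T) (\<Phi>' k))"
      by (rule exp_conv[OF pw bd'])
    have e1: "measure_pmf.expectation (rbb_path L (init L) T) (\<lambda>p. \<Prod>k<n. \<Phi>' k (map (\<lambda>\<eta>. \<eta> k) p))
       = measure_pmf.expectation (rbb_path L (init L) T) (\<lambda>p. \<Prod>k<n. \<Phi> k (map (\<lambda>\<eta>. \<eta> k) p))" for L
    proof (intro integral_cong_AE AE_pmfI)
      fix p assume "p \<in> set_pmf (rbb_path L (init L) T)"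
      then have "length p = Suc T" by (rule rbb_path_length)
      then show "(\<Prod>k<n. \<Phi>' k (map (\<lambda>\<eta>. \<eta> k) p)) = (\<Prod>k<n. \<Phi> k (map (\<lambda>\<eta>. \<eta> k) p))"
        unfolding \<Phi>'_def by simp
    qed auto
    have e2: "measure_pmf.expectation (nl_path \<mu> T) (\<Phi>' k) = measure_pmf.expectation (nl_path \<mu> T) (\<Phi> k)" for k
    proof (intro integral_cong_AE AE_pmfI)
      fix p assume "p \<in> set_pmf (nl_path \<mu> T)"
      then have "length p = Suc T" by (rule nl_path_length)
      then show "\<Phi>' k p = \<Phi> k p" unfolding \<Phi>'_def by simp
    qed auto
    show ?thesis using lim unfolding e1 e2 .
  qed
  show ?thesis using exl part2 by blast
qed


end
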